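(* Let $d\ge 3$, $\lambda>0$ with $\log d\lesssim\lambda\lesssim d$, $\rho_0=\log^{-c_0}d$ for a constant $c_0>0$, $\mu=\rho_0/(d+\lambda)$, and let $(a,b,c)$ solve \[ \dot a=a(24-16a-8r),\quad \dot b=8(1+\lambda)(1-r)b-16(1+\lambda)^2b^2,\quad \dot c=8(1-r)c-16c^2, \] with $r=a+(1+\lambda)b+(d-2)c$ and $a(0)=b(0)=c(0)=\mu$. Let $C=(d-2)c$, fix $\rho\in(0,1/12)$ and $\varepsilon\in(0,1/4]$, and define $T_{1a}=\inf\{t\ge0:r(t)\ge\rho\}$, $T_1=\inf\{t\ge T_{1a}:\dot b(t)\le0\}$, $T_{2a}=\inf\{t\ge T_1: r(t)\ge 1-\varepsilon\}$. Then, for $d$ large enough: (1) $T_{2a}-T_1=\Theta(\log(1/\rho_0))=\Theta(\log\log d)$; (2) $C(T_{2a})\ge\frac23-\varepsilon-o(1)$, and hence $c(T_{2a})=\Theta(1/d)$; (3) $a(T_{2a})=\mu\,\rho_0^{-O(1)}=\frac{\log^{O(1)}d}{d+\lambda}=o(1)$; (4) $\mathrm{Align}(T_{2a})\le O(\sqrt d\,a(T_{2a}))=o(1)$.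
   Context: This ODE is the population gradient flow of the phase-retrieval model $y=(x^\top w_\star)^2+\nu$, $x\sim\mathcal N(0,I_d+\lambda vv^\top)$ ($v\perp w_\star$ unit vectors), with network $f_W(x)=\sum_{j=1}^d(w_j^\top x)^2$, in the coordinates $WW^\top=a\,w_\star w_\star^\top+b\,vv^\top+c(I-w_\star w_\star^\top-vv^\top)$, started from $WW^\top=\mu I_d$. The alignment is $\mathrm{Align}(t)=a(t)/\sqrt{a(t)^2+b(t)^2+(d-2)c(t)^2}$. Asymptotic notation refers to $d\to\infty$ with $\varepsilon,\rho$ fixed. *)

theory Defs
  imports "HOL-Analysis.Analysis" "HOL-Library.Landau_Symbols"
begin

definition rsum :: "nat \<Rightarrow> real \<Rightarrow> real \<Rightarrow> real \<Rightarrow> real \<Rightarrow> real" where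
  "rsum d lam a b c = a + (1 + lam) * b + (real d - 2) * c"

definition adot :: "nat \<Rightarrow> real \<Rightarrow> real \<Rightarrow> real \<Rightarrow> real \<Rightarrow> real" where
  "adot d lam a b c = a * (24 - 16 * a - 8 * rsum d lam a b c)"

definition bdot :: "nat \<Rightarrow> real \<Rightarrow> real \<Rightarrow> real \<Rightarrow> real \<Rightarrow> real" where
  "bdot d lam a b c = 8 * (1 + lam) * (1 - rsum d lam a b c) * b - 16 * (1 + lam)^2 * b^2"

definition cdot :: "nat \<Rightarrow> real \<Rightarrow> real \<Rightarrow> real \<Rightarrow> real \<Rightarrow> real" where
  "cdot d lam a b c = 8 * (1 - rsum d lam a b c) * c - 16 * c^2"

definition align :: "nat \<Rightarrow> real \<Rightarrow> real \<Rightarrow> real \<Rightarrow> real" where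
  "align d a b c = a / sqrt (a^2 + b^2 + (real d - 2) * c^2)"

definition rho0 :: "real \<Rightarrow> nat \<Rightarrow> real" where
  "rho0 c0 d = ln (real d) powr (- c0)"

definition mu0 :: "real \<Rightarrow> real \<Rightarrow> nat \<Rightarrow> real" where
  "mu0 c0 lam d = rho0 c0 d / (real d + lam)"

definition T1a :: "nat \<Rightarrow> real \<Rightarrow> real \<Rightarrow> (real \<Rightarrow> real) \<Rightarrow> (real \<Rightarrow> real) \<Rightarrow> (real \<Rightarrow> real) \<Rightarrow> real" where
  "T1a d lam rho a b c = Inf {t. 0 \<le> t \<and> rho \<le> rsum d lam (a t) (b t) (c t)}"

definition T1 :: "nat \<Rightarrow> real \<Rightarrow> real \<Rightarrow> (real \<Rightarrow> real) \<Rightarrow> (real \<Rightarrow> real) \<Rightarrow> (real \<Rightarrow> real) \<Rightarrow> real" where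
  "T1 d lam rho a b c = Inf {t. T1a d lam rho a b c \<le> t \<and> bdot d lam (a t) (b t) (c t) \<le> 0}"

definition T2a :: "nat \<Rightarrow> real \<Rightarrow> real \<Rightarrow> real \<Rightarrow> (real \<Rightarrow> real) \<Rightarrow> (real \<Rightarrow> real) \<Rightarrow> (real \<Rightarrow> real) \<Rightarrow> real" where
  "T2a d lam rho eps a b c = Inf {t. T1 d lam rho a b c \<le> t \<and> 1 - eps \<le> rsum d lam (a t) (b t) (c t)}"

end

theory Submission
  imports Defs "HOL-Real_Asymp.Real_Asymp"
begin

lemma deriv_within_at:
  assumes "(f has_real_derivative D) (at x within {0..})" "0 < x"
  shows "(f has_real_derivative D) (at x)"
proof -
  have "x \<in> interior {0::real..}" using assms(2) by simp
  then have "at x within {0..} = at x" by (rule at_within_interior)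
  with assms(1) show ?thesis by simp
qed

lemma exp_lower:
  fixes x :: "real \<Rightarrow> real"
  assumes st: "s \<le> t" and cont: "continuous_on {s..t} x"
    and der: "\<And>y. s < y \<Longrightarrow> y < t \<Longrightarrow> \<exists>D. (x has_real_derivative D) (at y) \<and> m * x y \<le> D"
  shows "x s * exp (m * (t - s)) \<le> x t"
proof -
  let ?p = "\<lambda>y. x y * exp (- m * y)"
  have "?p s \<le> ?p t"
  proof (rule DERIV_nonneg_imp_increasing_open[OF st])
    fix y assume y: "s < y" "y < t"
    obtain D where D: "(x has_real_derivative D) (at y)" "m * x y \<le> D" using der[OF y] by blast
    have "(?p has_real_derivative (D * exp (- m * y) + x y * (exp (- m * y) * (- m)))) (at y)"
      by (rule derivative_eq_intros D refl | simp)+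
    moreover have "0 \<le> D * exp (- m * y) + x y * (exp (- m * y) * (- m))"
    proof -
      have "D * exp (- m * y) + x y * (exp (- m * y) * (- m)) = (D - m * x y) * exp (- m * y)"
        by (simp add: algebra_simps)
      also have "\<dots> \<ge> 0" using D(2) by simp
      finally show ?thesis .
    qed
    ultimately show "\<exists>y'. (?p has_real_derivative y') (at y) \<and> 0 \<le> y'" by blast
  next
    show "continuous_on {s..t} ?p"
      by (intro continuous_intros cont)
  qed
  then have "x s * exp (- m * s) * exp (m * t) \<le> x t * exp (- m * t) * exp (m * t)"
    by (simp add: mult_right_mono)
  also have "x t * exp (- m * t) * exp (m * t) = x t" by (simp add: mult.assoc exp_add[symmetric])
  also have "x s * exp (- m * s) * exp (m * t) = x s * exp (m * (t - s))"
    by (simp add: mult.assoc exp_add[symmetric] algebra_simps)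
  finally show ?thesis .
qed

lemma exp_upper:
  fixes x :: "real \<Rightarrow> real"
  assumes st: "s \<le> t" and cont: "continuous_on {s..t} x"
    and der: "\<And>y. s < y \<Longrightarrow> y < t \<Longrightarrow> \<exists>D. (x has_real_derivative D) (at y) \<and> D \<le> M * x y"
  shows "x t \<le> x s * exp (M * (t - s))"
proof -
  have "(\<lambda>y. - x y) s * exp (M * (t - s)) \<le> (\<lambda>y. - x y) t"
  proof (rule exp_lower[OF st])
    show "continuous_on {s..t} (\<lambda>y. - x y)" by (intro continuous_intros cont)
  next
    fix y assume y: "s < y" "y < t"
    obtain D where D: "(x has_real_derivative D) (at y)" "D \<le> M * x y" using der[OF y] by blast
    have "((\<lambda>y. - x y) has_real_derivative - D) (at y)" using D(1) by (rule DERIV_minus)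
    moreover have "M * (- x y) \<le> - D" using D(2) by simp
    ultimately show "\<exists>D. ((\<lambda>y. - x y) has_real_derivative D) (at y) \<and> M * (- x y) \<le> D" by blast
  qed
  then show ?thesis by simp
qed

lemma deriv_mono:
  fixes x :: "real \<Rightarrow> real"
  assumes st: "s \<le> t" and cont: "continuous_on {s..t} x"
    and der: "\<And>y. s < y \<Longrightarrow> y < t \<Longrightarrow> \<exists>D. (x has_real_derivative D) (at y) \<and> 0 \<le> D"
  shows "x s \<le> x t"
  using DERIV_nonneg_imp_increasing_open[OF st _ cont] der by blast

lemma barrier:
  fixes x :: "real \<Rightarrow> real"
  assumes cont: "continuous_on {s..} x" and xs: "x s \<le> K"
    and der: "\<And>y. s < y \<Longrightarrow> K < x y \<Longrightarrow> \<exists>D. (x has_real_derivative D) (at y) \<and> D \<le> 0"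
    and st: "s \<le> t"
  shows "x t \<le> K"
proof (rule ccontr)
  assume "\<not> x t \<le> K"
  then have xt: "K < x t" by simp
  define S where "S = {s..t} \<inter> x -` {..K}"
  have contst: "continuous_on {s..t} x" using cont by (rule continuous_on_subset) auto
  have clS: "closed S" unfolding S_def
    by (rule continuous_closed_preimage[OF contst]) auto
  have sS: "s \<in> S" using xs st by (auto simp: S_def)
  have bS: "bdd_above S" by (auto simp: S_def bdd_above_def)
  define \<sigma> where "\<sigma> = Sup S"
  have \<sigma>S: "\<sigma> \<in> S" unfolding \<sigma>_def using closed_contains_Sup[OF _ bS clS] sS by blast
  then have \<sigma>t: "\<sigma> \<le> t" "s \<le> \<sigma>" "x \<sigma> \<le> K" by (auto simp: S_def)
  have gt: "K < x y" if "\<sigma> < y" "y \<le> t" for y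
  proof (rule ccontr)
    assume "\<not> K < x y"
    then have "y \<in> S" using that \<sigma>t by (auto simp: S_def)
    then have "y \<le> \<sigma>" unfolding \<sigma>_def using bS by (rule cSup_upper)
    with that show False by simp
  qed
  have "(\<lambda>y. - x y) \<sigma> \<le> (\<lambda>y. - x y) t"
  proof (rule deriv_mono[OF \<sigma>t(1)])
    show "continuous_on {\<sigma>..t} (\<lambda>y. - x y)"
      by (intro continuous_intros continuous_on_subset[OF cont]) (use \<sigma>t in auto)
  next
    fix y assume y: "\<sigma> < y" "y < t"
    obtain D where D: "(x has_real_derivative D) (at y)" "D \<le> 0"
      using der[of y] gt[of y] y \<sigma>t by auto
    show "\<exists>D. ((\<lambda>y. - x y) has_real_derivative D) (at y) \<and> 0 \<le> D"
      using DERIV_minus[OF D(1)] D(2) by auto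
  qed
  with \<sigma>t xt show False by simp
qed

lemma first_hit:
  fixes f :: "real \<Rightarrow> real"
  assumes cont: "continuous_on {s..} f" and fs: "f s < K" and t0: "s \<le> t0" "K \<le> f t0"
  defines "T \<equiv> Inf {t. s \<le> t \<and> K \<le> f t}"
  shows "s < T" "T \<le> t0" "f T = K" "\<And>y. s \<le> y \<Longrightarrow> y < T \<Longrightarrow> f y < K"
proof -
  define S where "S = {t. s \<le> t \<and> K \<le> f t}"
  have S_eq: "S = {s..} \<inter> f -` {K..}" by (auto simp: S_def)
  have clS: "closed S" unfolding S_eq by (rule continuous_closed_preimage[OF cont]) auto
  have ne: "S \<noteq> {}" using t0 by (auto simp: S_def)
  have bb: "bdd_below S" by (auto simp: S_def bdd_below_def)
  have TS: "T \<in> S" unfolding T_def S_def[symmetric] by (rule closed_contains_Inf[OF ne bb clS])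
  show Tt0: "T \<le> t0" unfolding T_def S_def[symmetric] by (rule cInf_lower) (use t0 bb in \<open>auto simp: S_def\<close>)
  show lt: "f y < K" if "s \<le> y" "y < T" for y
  proof (rule ccontr)
    assume "\<not> f y < K"
    then have "y \<in> S" using that by (auto simp: S_def)
    then have "T \<le> y" unfolding T_def S_def[symmetric] using bb by (rule cInf_lower)
    with that show False by simp
  qed
  have sT: "s \<le> T" using TS by (auto simp: S_def)
  show "s < T"
  proof (rule ccontr)
    assume "\<not> s < T"
    then have "T = s" using sT by simp
    with TS fs show False by (auto simp: S_def)
  qed
  have KT: "K \<le> f T" using TS by (auto simp: S_def)
  have contT: "continuous_on {s..T} f" using cont by (rule continuous_on_subset) auto
  obtain z where z: "s \<le> z" "z \<le> T" "f z = K"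
    using IVT'[of f s K T, OF _ KT sT contT] fs by auto
  have "z = T" using lt[of z] z by force
  with z show "f T = K" by simp
qed

lemma cont_from_deriv:
  assumes "\<forall>t\<ge>0. (f has_real_derivative D t) (at t within {0..})"
  shows "continuous_on {0..} f"
  unfolding continuous_on_eq_continuous_within
proof
  fix x :: real assume "x \<in> {0..}"
  then have "(f has_real_derivative D x) (at x within {0..})" using assms by auto
  then show "continuous (at x within {0..}) f" by (rule DERIV_continuous)
qed

lemma pos_lemma:
  fixes x g :: "real \<Rightarrow> real"
  assumes contx: "continuous_on {0..} x" and x0: "0 < x 0" and contg: "continuous_on {0..} g"
    and der: "\<And>y. 0 < y \<Longrightarrow> (x has_real_derivative x y * g y) (at y)"
    and t: "0 \<le> t"
  shows "0 < x t"
proof (rule ccontr)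
  assume "\<not> 0 < x t"
  then have xt: "0 \<le> - x t" by simp
  have c2: "continuous_on {0..} (\<lambda>y. - x y)" by (intro continuous_intros contx)
  define T where "T = Inf {y. 0 \<le> y \<and> 0 \<le> (\<lambda>y. - x y) y}"
  note fh = first_hit[OF c2 _ t xt, folded T_def]
  have T0: "0 < T" and xT: "x T = 0" and before: "\<And>y. 0 \<le> y \<Longrightarrow> y < T \<Longrightarrow> 0 < x y"
    using fh x0 by auto
  have "compact {0..T}" by simp
  moreover have "{0..T} \<noteq> {}" using T0 by simp
  moreover have "continuous_on {0..T} g" using contg by (rule continuous_on_subset) auto
  ultimately obtain z where z: "\<forall>y\<in>{0..T}. g z \<le> g y"
    using continuous_attains_inf by blast
  have "x 0 * exp (g z * (T - 0)) \<le> x T"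
  proof (rule exp_lower)
    show "0 \<le> T" using T0 by simp
    show "continuous_on {0..T} x" using contx by (rule continuous_on_subset) auto
  next
    fix y assume y: "0 < y" "y < T"
    have "g z * x y \<le> g y * x y" using z y before[of y] by (intro mult_right_mono) auto
    then show "\<exists>D. (x has_real_derivative D) (at y) \<and> g z * x y \<le> D"
      using der[OF y(1)] by (auto simp: mult.commute)
  qed
  moreover have "0 < x 0 * exp (g z * (T - 0))" using x0 by simp
  ultimately show False using xT by simp
qed

definition tau1 :: "real \<Rightarrow> real \<Rightarrow> real" where
  "tau1 L mu = ln (1 / ((1 + L) * mu)) / (6 * (1 + L))"
definition s0f :: "nat \<Rightarrow> real \<Rightarrow> real \<Rightarrow> real \<Rightarrow> real" where
  "s0f d L rho mu = ln (1 + 3 * (1 + L) / ((real d - 2) * mu)) / (12 * (1 + L) * rho)"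
definition s1f :: "nat \<Rightarrow> real \<Rightarrow> real \<Rightarrow> real" where
  "s1f d eps mu = ln (1 / ((real d - 2) * mu)) / (4 * eps)"

locale traj =
  fixes d :: nat and L rho eps mu :: real and a b c :: "real \<Rightarrow> real"
  assumes d3: "3 \<le> d" and Lpos: "0 < L" and mupos: "0 < mu"
    and rho: "0 < rho" "rho < 1/12" and eps: "0 < eps" "eps \<le> 1/4"
    and ode: "\<forall>t\<ge>0.
           (a has_real_derivative adot d L (a t) (b t) (c t)) (at t within {0..}) \<and>
           (b has_real_derivative bdot d L (a t) (b t) (c t)) (at t within {0..}) \<and>
           (c has_real_derivative cdot d L (a t) (b t) (c t)) (at t within {0..})"
    and init: "a 0 = mu" "b 0 = mu" "c 0 = mu"
    and n_big: "4 / rho \<le> real d - 2" "4 / eps \<le> real d - 2"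
    and p_small: "mu * (real d + L) < rho"
    and a3: "mu * exp (24 * (tau1 L mu + s0f d L rho mu)) + (real d - 2) * mu * exp (8 * (tau1 L mu + s0f d L rho mu)) \<le> rho / 2"
    and a4: "mu * exp (24 * (tau1 L mu + s0f d L rho mu + s1f d eps mu)) \<le> 1 / 12"
begin

abbreviation "n \<equiv> real d - 2"
definition "B t = (1 + L) * b t"
definition "C t = n * c t"
definition "r t = rsum d L (a t) (b t) (c t)"
definition "gg t = 1 - a t - C t - 3 * B t"

lemma n_ge1: "1 \<le> n" using d3 by simp

lemma r_eq: "r t = a t + B t + C t"
  by (simp add: r_def rsum_def B_def C_def)

lemma conts: "continuous_on {0..} a" "continuous_on {0..} b" "continuous_on {0..} c"
  using ode by (auto intro!: cont_from_deriv)

lemma cont_r: "continuous_on {0..} r"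
  unfolding r_def rsum_def by (intro continuous_intros conts)
lemma cont_B: "continuous_on {0..} B"
  unfolding B_def by (intro continuous_intros conts)
lemma cont_C: "continuous_on {0..} C"
  unfolding C_def by (intro continuous_intros conts)
lemma cont_gg: "continuous_on {0..} gg"
  unfolding gg_def by (intro continuous_intros conts cont_B cont_C)

lemma der_a: "0 < y \<Longrightarrow> (a has_real_derivative a y * (24 - 16 * a y - 8 * r y)) (at y)"
  using ode deriv_within_at by (auto simp: adot_def r_def)
lemma der_b: "0 < y \<Longrightarrow> (b has_real_derivative b y * (8 * (1 + L) * (1 - r y) - 16 * (1 + L)^2 * b y)) (at y)"
proof -
  assume y: "0 < y"
  have "bdot d L (a y) (b y) (c y) = b y * (8 * (1 + L) * (1 - r y) - 16 * (1 + L)^2 * b y)"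
    by (simp add: bdot_def r_def algebra_simps power2_eq_square)
  then show ?thesis using ode deriv_within_at y by (metis less_imp_le)
qed
lemma der_c: "0 < y \<Longrightarrow> (c has_real_derivative c y * (8 * (1 - r y) - 16 * c y)) (at y)"
proof -
  assume y: "0 < y"
  have "cdot d L (a y) (b y) (c y) = c y * (8 * (1 - r y) - 16 * c y)"
    by (simp add: cdot_def r_def algebra_simps power2_eq_square)
  then show ?thesis using ode deriv_within_at y by (metis less_imp_le)
qed

lemma pos_a: "0 \<le> t \<Longrightarrow> 0 < a t"
  by (rule pos_lemma[OF conts(1) _ _ der_a]) (use init mupos in \<open>auto intro!: continuous_intros conts cont_r\<close>)
lemma pos_b: "0 \<le> t \<Longrightarrow> 0 < b t"
  by (rule pos_lemma[OF conts(2) _ _ der_b]) (use init mupos in \<open>auto intro!: continuous_intros conts cont_r\<close>)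
lemma pos_c: "0 \<le> t \<Longrightarrow> 0 < c t"
  by (rule pos_lemma[OF conts(3) _ _ der_c]) (use init mupos in \<open>auto intro!: continuous_intros conts cont_r\<close>)

lemma pos_B: "0 \<le> t \<Longrightarrow> 0 < B t" using pos_b Lpos by (simp add: B_def)
lemma pos_C: "0 \<le> t \<Longrightarrow> 0 < C t" using pos_c n_ge1 by (simp add: C_def)
lemma pos_r: "0 \<le> t \<Longrightarrow> 0 < r t" using pos_a pos_B pos_C r_eq by (metis add_pos_pos)

lemma der_B: "0 < y \<Longrightarrow> (B has_real_derivative 8 * (1 + L) * B y * (1 - r y - 2 * B y)) (at y)"
proof -
  assume y: "0 < y"
  have "(B has_real_derivative (1 + L) * (b y * (8 * (1 + L) * (1 - r y) - 16 * (1 + L)^2 * b y))) (at y)"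
    unfolding B_def[abs_def] by (intro DERIV_cmult der_b y)
  moreover have "(1 + L) * (b y * (8 * (1 + L) * (1 - r y) - 16 * (1 + L)^2 * b y)) = 8 * (1 + L) * B y * (1 - r y - 2 * B y)"
    by (simp add: B_def algebra_simps power2_eq_square)
  ultimately show ?thesis by simp
qed
lemma der_C: "0 < y \<Longrightarrow> (C has_real_derivative 8 * C y * (1 - r y - 2 * C y / n)) (at y)"
proof -
  assume y: "0 < y"
  have "(C has_real_derivative n * (c y * (8 * (1 - r y) - 16 * c y))) (at y)"
    unfolding C_def[abs_def] by (intro DERIV_cmult der_c y)
  moreover have "n * (c y * (8 * (1 - r y) - 16 * c y)) = 8 * C y * (1 - r y - 2 * C y / n)"
  proof -
    have "2 * C y / n = 2 * c y" using n_ge1 by (simp add: C_def)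
    then show ?thesis by (simp add: C_def algebra_simps)
  qed
  ultimately show ?thesis by simp
qed

end

context traj begin

lemma r0: "r 0 = mu * (real d + L)"
  using init by (simp add: r_def rsum_def algebra_simps)

lemma B0: "B 0 = (1 + L) * mu" using init by (simp add: B_def)
lemma C0: "C 0 = n * mu" using init by (simp add: C_def)

lemma p_lt1: "mu * (real d + L) < 1" using p_small rho by simp

lemma B0_le: "(1 + L) * mu \<le> mu * (real d + L)"
  using d3 mupos by (simp add: algebra_simps)
lemma C0_le: "n * mu \<le> mu * (real d + L)"
  using d3 mupos Lpos by (simp add: algebra_simps)

lemma B_le_r: "0 \<le> t \<Longrightarrow> B t \<le> r t" using pos_a pos_C r_eq[of t] by (smt (verit))
lemma C_le_r: "0 \<le> t \<Longrightarrow> C t \<le> r t" using pos_a pos_B r_eq[of t] by (smt (verit))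
lemma a_le_r: "0 \<le> t \<Longrightarrow> a t \<le> r t" using pos_C pos_B r_eq[of t] by (smt (verit))

lemma B_le: "0 \<le> t \<Longrightarrow> B t \<le> 1/3"
proof (rule barrier[OF cont_B])
  show "B 0 \<le> 1/3" using B0 B0_le p_small rho by simp
next
  fix y :: real assume y: "0 < y" "1/3 < B y"
  have "1 - r y - 2 * B y \<le> 0" using B_le_r[of y] y by simp
  then have "8 * (1 + L) * B y * (1 - r y - 2 * B y) \<le> 0"
    using Lpos y by (intro mult_nonneg_nonpos) auto
  then show "\<exists>D. (B has_real_derivative D) (at y) \<and> D \<le> 0" using der_B[OF y(1)] by blast
qed

lemma a_upper: "0 \<le> t \<Longrightarrow> a t \<le> mu * exp (24 * t)"
proof -
  assume t: "0 \<le> t"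
  have "a t \<le> a 0 * exp (24 * (t - 0))"
  proof (rule exp_upper[OF t])
    show "continuous_on {0..t} a" using conts(1) by (rule continuous_on_subset) auto
  next
    fix y :: real assume y: "0 < y" "y < t"
    have "a y * (24 - 16 * a y - 8 * r y) \<le> 24 * a y"
      using pos_a[of y] pos_r[of y] y by (simp add: algebra_simps)
    then show "\<exists>D. (a has_real_derivative D) (at y) \<and> D \<le> 24 * a y" using der_a[OF y(1)] by blast
  qed
  then show ?thesis using init by simp
qed

lemma C_upper: "0 \<le> t \<Longrightarrow> C t \<le> n * mu * exp (8 * t)"
proof -
  assume t: "0 \<le> t"
  have "C t \<le> C 0 * exp (8 * (t - 0))"
  proof (rule exp_upper[OF t])
    show "continuous_on {0..t} C" using cont_C by (rule continuous_on_subset) auto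
  next
    fix y :: real assume y: "0 < y" "y < t"
    have "0 < C y / n" using pos_C[of y] n_ge1 y by simp
    then have "1 - r y - 2 * C y / n \<le> 1" using pos_r[of y] y by simp
    then have "8 * C y * (1 - r y - 2 * C y / n) \<le> 8 * C y * 1"
      using pos_C[of y] y by (intro mult_left_mono) auto
    then show "\<exists>D. (C has_real_derivative D) (at y) \<and> D \<le> 8 * C y" using der_C[OF y(1)] by auto
  qed
  then show ?thesis using C0 by simp
qed

lemma C_grow:
  assumes st: "0 \<le> s" "s \<le> t" and rb: "\<And>y. s \<le> y \<Longrightarrow> y \<le> t \<Longrightarrow> r y \<le> 1 - \<delta>"
    and dn: "4 / n \<le> \<delta>"
  shows "C s * exp (4 * \<delta> * (t - s)) \<le> C t"
proof (rule exp_lower[OF st(2)])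
  show "continuous_on {s..t} C" using cont_C by (rule continuous_on_subset) (use st in auto)
next
  fix y :: real assume y: "s < y" "y < t"
  have y0: "0 < y" using y st by simp
  have Cy: "C y \<le> 1 - \<delta>" using C_le_r[of y] rb[of y] y st by simp
  have dpos: "0 < \<delta>" using dn n_ge1 by (smt (verit) divide_pos_pos)
  have "2 * C y / n \<le> 2 / n" using Cy dpos n_ge1 by (simp add: divide_right_mono)
  also have "\<dots> \<le> \<delta> / 2" using dn by simp
  finally have "\<delta> / 2 \<le> 1 - r y - 2 * C y / n" using rb[of y] y by simp
  then have "8 * C y * (\<delta> / 2) \<le> 8 * C y * (1 - r y - 2 * C y / n)"
    using pos_C[of y] y0 by (intro mult_left_mono) auto
  then show "\<exists>D. (C has_real_derivative D) (at y) \<and> 4 * \<delta> * C y \<le> D"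
    using der_C[OF y0] by (auto simp: algebra_simps)
qed

lemma a_mono:
  assumes st: "0 \<le> s" "s \<le> t" and rb: "\<And>y. s \<le> y \<Longrightarrow> y \<le> t \<Longrightarrow> r y \<le> 1"
  shows "a s \<le> a t"
proof (rule deriv_mono[OF st(2)])
  show "continuous_on {s..t} a" using conts(1) by (rule continuous_on_subset) (use st in auto)
next
  fix y :: real assume y: "s < y" "y < t"
  have y0: "0 < y" using y st by simp
  have "0 \<le> 24 - 16 * a y - 8 * r y" using a_le_r[of y] rb[of y] y y0 by simp
  then show "\<exists>D. (a has_real_derivative D) (at y) \<and> 0 \<le> D"
    using der_a[OF y0] pos_a[of y] y0 by (meson less_imp_le mult_nonneg_nonneg)
qed

end

context traj begin

abbreviation "Tm \<equiv> tau1 L mu + s0f d L rho mu"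

lemma tau1_nonneg: "0 \<le> tau1 L mu"
proof -
  have "(1 + L) * mu < 1" using B0_le p_lt1 by simp
  moreover have "0 < (1 + L) * mu" using Lpos mupos by simp
  ultimately have "1 \<le> 1 / ((1 + L) * mu)" by simp
  then show ?thesis unfolding tau1_def using Lpos by simp
qed

lemma s0_nonneg: "0 \<le> s0f d L rho mu"
proof -
  have "0 \<le> 3 * (1 + L) / (n * mu)" using Lpos mupos n_ge1 by simp
  then show ?thesis unfolding s0f_def using Lpos rho by simp
qed

lemma phase1_exists: "\<exists>t0. 0 \<le> t0 \<and> t0 \<le> tau1 L mu \<and> rho \<le> r t0"
proof (rule ccontr)
  assume "\<not> ?thesis"
  then have lt: "\<And>y. 0 \<le> y \<Longrightarrow> y \<le> tau1 L mu \<Longrightarrow> r y < rho" by force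
  have "B 0 * exp (6 * (1 + L) * (tau1 L mu - 0)) \<le> B (tau1 L mu)"
  proof (rule exp_lower[OF tau1_nonneg])
    show "continuous_on {0..tau1 L mu} B" using cont_B by (rule continuous_on_subset) auto
  next
    fix y :: real assume y: "0 < y" "y < tau1 L mu"
    have "r y < rho" using lt[of y] y by simp
    moreover have "B y \<le> r y" using B_le_r[of y] y by simp
    ultimately have "3/4 \<le> 1 - r y - 2 * B y" using rho by simp
    then have "8 * (1 + L) * B y * (3/4) \<le> 8 * (1 + L) * B y * (1 - r y - 2 * B y)"
      using Lpos pos_B[of y] y by (intro mult_left_mono) auto
    then show "\<exists>D. (B has_real_derivative D) (at y) \<and> 6 * (1 + L) * B y \<le> D"
      using der_B[OF y(1)] by (auto simp: algebra_simps)
  qed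
  also have "B 0 * exp (6 * (1 + L) * (tau1 L mu - 0)) = 1"
  proof -
    have "6 * (1 + L) * (tau1 L mu - 0) = ln (1 / ((1 + L) * mu))"
      unfolding tau1_def using Lpos by simp
    moreover have "0 < (1 + L) * mu" using Lpos mupos by simp
    ultimately show ?thesis using B0 Lpos mupos by simp
  qed
  finally have "1 \<le> B (tau1 L mu)" .
  moreover have "B (tau1 L mu) \<le> r (tau1 L mu)" using B_le_r tau1_nonneg by simp
  moreover have "r (tau1 L mu) < rho" using lt tau1_nonneg by simp
  ultimately show False using rho by simp
qed

abbreviation "U \<equiv> T1a d L rho a b c"

lemma set1_eq: "{t. 0 \<le> t \<and> rho \<le> rsum d L (a t) (b t) (c t)} = {t. 0 \<le> t \<and> rho \<le> r t}"
  by (simp add: r_def)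

lemma phase1:
  shows "{t. 0 \<le> t \<and> rho \<le> rsum d L (a t) (b t) (c t)} \<noteq> {}"
    and "0 < U" "U \<le> tau1 L mu" "r U = rho" "\<And>y. 0 \<le> y \<Longrightarrow> y < U \<Longrightarrow> r y < rho"
proof -
  obtain t0 where t0: "0 \<le> t0" "t0 \<le> tau1 L mu" "rho \<le> r t0" using phase1_exists by blast
  then show "{t. 0 \<le> t \<and> rho \<le> rsum d L (a t) (b t) (c t)} \<noteq> {}" unfolding set1_eq by blast
  have r0lt: "r 0 < rho" using r0 p_small by simp
  have UU: "U = Inf {t. 0 \<le> t \<and> rho \<le> r t}" unfolding T1a_def set1_eq ..
  note fh = first_hit[OF cont_r r0lt t0(1) t0(3), folded UU]
  show "0 < U" "r U = rho" "\<And>y. 0 \<le> y \<Longrightarrow> y < U \<Longrightarrow> r y < rho" using fh by auto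
  show "U \<le> tau1 L mu" using fh(2) t0(2) by simp
qed

lemma AC_small: "0 \<le> t \<Longrightarrow> t \<le> Tm \<Longrightarrow> a t + C t \<le> rho / 2"
proof -
  assume t: "0 \<le> t" "t \<le> Tm"
  have "a t \<le> mu * exp (24 * Tm)" using a_upper[OF t(1)] t mupos by (smt (verit) exp_le_cancel_iff mult_left_mono)
  moreover have "C t \<le> n * mu * exp (8 * Tm)" using C_upper[OF t(1)] t mupos n_ge1
    by (smt (verit) exp_le_cancel_iff mult_left_mono mult_pos_pos)
  ultimately show ?thesis using a3 by (simp add: algebra_simps)
qed

end

context traj begin

lemma gg_eq: "gg t = 1 - r t - 2 * B t" by (simp add: gg_def r_eq)

lemma bdot_eq: "bdot d L (a t) (b t) (c t) = 8 * (1 + L) * b t * gg t"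
  by (simp add: bdot_def gg_eq r_def B_def algebra_simps power2_eq_square)

lemma der_gg: "0 < y \<Longrightarrow> (gg has_real_derivative
   (- (a y * (24 - 16 * a y - 8 * r y)) - 8 * C y * (1 - r y - 2 * C y / n) - 3 * (8 * (1 + L) * B y * (1 - r y - 2 * B y)))) (at y)"
proof -
  assume y: "0 < y"
  have "((\<lambda>z. 1 - a z - C z - 3 * B z) has_real_derivative
     (0 - (a y * (24 - 16 * a y - 8 * r y)) - 8 * C y * (1 - r y - 2 * C y / n) - 3 * (8 * (1 + L) * B y * (1 - r y - 2 * B y)))) (at y)"
    by (intro DERIV_diff DERIV_const DERIV_cmult der_a[OF y] der_B[OF y] der_C[OF y])
  then show ?thesis unfolding gg_def[abs_def] by simp
qed

lemma n_rho: "4 / n \<le> rho"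
proof -
  have "4 \<le> rho * n" using n_big(1) rho by (simp add: field_simps)
  then show ?thesis using n_ge1 by (simp add: field_simps)
qed

lemma n_eps: "4 / n \<le> eps"
proof -
  have "4 \<le> eps * n" using n_big(2) eps by (simp add: field_simps)
  then show ?thesis using n_ge1 by (simp add: field_simps)
qed

lemma U_le_Tm: "U \<le> Tm" using phase1(3) s0_nonneg by simp

lemma B_U: "rho / 2 \<le> B U"
  using AC_small[of U] phase1(2) U_le_Tm phase1(4) r_eq[of U] by simp

lemma gg_U: "0 < gg U"
  using gg_eq[of U] phase1(4) B_le_r[of U] phase1(2) rho by simp

lemma phase2_exists: "\<exists>t0. U \<le> t0 \<and> t0 \<le> U + s0f d L rho mu \<and> gg t0 \<le> 0"
proof (rule ccontr)
  define s0 where "s0 = s0f d L rho mu"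
  define Lam where "Lam = 12 * (1 + L) * rho"
  define kap where "kap = 4 * rho * n * mu"
  have Lam_pos: "0 < Lam" unfolding Lam_def using Lpos rho by simp
  have kap_pos: "0 < kap" unfolding kap_def using rho n_ge1 mupos by simp
  assume "\<not> ?thesis"
  then have gpos: "\<And>y. U \<le> y \<Longrightarrow> y \<le> U + s0 \<Longrightarrow> 0 < gg y" unfolding s0_def by force
  have U0: "0 < U" by (rule phase1(2))
  have s0nn: "0 \<le> s0" unfolding s0_def by (rule s0_nonneg)
  have Tm_eq: "U + s0 \<le> Tm" using phase1(3) unfolding s0_def by simp
  have Bmono: "B U \<le> B y" if y: "U \<le> y" "y \<le> U + s0" for y
  proof (rule deriv_mono[OF y(1)])
    show "continuous_on {U..y} B" using cont_B by (rule continuous_on_subset) (use U0 in auto)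
  next
    fix z assume z: "U < z" "z < y"
    have z0: "0 < z" using z U0 by simp
    have "0 \<le> 8 * (1 + L) * B z * (1 - r z - 2 * B z)"
      using gpos[of z] z y gg_eq[of z] pos_B[of z] z0 Lpos by simp
    then show "\<exists>D. (B has_real_derivative D) (at z) \<and> 0 \<le> D" using der_B[OF z0] by blast
  qed
  have Bbig: "rho / 2 \<le> B y" if "U \<le> y" "y \<le> U + s0" for y
    using Bmono[OF that] B_U by simp
  have rsmall: "r y \<le> 1 - rho" if "0 \<le> y" "y \<le> U + s0" for y
  proof (cases "y < U")
    case True then show ?thesis using phase1(5)[of y] that rho by simp
  next
    case False
    then have "0 < gg y" "rho / 2 \<le> B y" using gpos Bbig that by auto
    then show ?thesis using gg_eq[of y] by simp
  qed
  have Cbig: "n * mu \<le> C y" if "0 \<le> y" "y \<le> U + s0" for y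
  proof -
    have "C 0 * exp (4 * rho * (y - 0)) \<le> C y"
      by (rule C_grow) (use that rsmall n_rho in auto)
    moreover have "C 0 \<le> C 0 * exp (4 * rho * (y - 0))" using C0 n_ge1 mupos that rho by simp
    ultimately show ?thesis using C0 by simp
  qed
  define x where "x t = gg t + kap / Lam" for t
  have "x (U + s0) \<le> x U * exp (- Lam * ((U + s0) - U))"
  proof (rule exp_upper)
    show "U \<le> U + s0" using s0nn by simp
    show "continuous_on {U..U + s0} x" unfolding x_def
      by (intro continuous_intros continuous_on_subset[OF cont_gg]) (use U0 in auto)
  next
    fix y assume y: "U < y" "y < U + s0"
    have y0: "0 < y" using y U0 by simp
    have ry: "r y \<le> 1 - rho" using rsmall[of y] y y0 by simp
    have ay: "0 \<le> a y * (24 - 16 * a y - 8 * r y)"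
      using a_le_r[of y] ry pos_a[of y] y0 rho by (intro mult_nonneg_nonneg) auto
    have Cy: "kap \<le> 8 * C y * (1 - r y - 2 * C y / n)"
    proof -
      have "C y \<le> 1" using C_le_r[of y] ry y0 rho by simp
      then have "2 * C y / n \<le> 2 / n" using n_ge1 by (simp add: divide_right_mono)
      also have "\<dots> \<le> rho / 2" using n_big(1) rho n_ge1 by (simp add: field_simps)
      finally have "rho / 2 \<le> 1 - r y - 2 * C y / n" using ry by simp
      moreover have "n * mu \<le> C y" using Cbig[of y] y y0 by simp
      ultimately have "8 * (n * mu) * (rho / 2) \<le> 8 * C y * (1 - r y - 2 * C y / n)"
        using rho n_ge1 mupos pos_C[of y] y0 by (intro mult_mono) auto
      then show ?thesis unfolding kap_def by (simp add: algebra_simps)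
    qed
    have e: "1 - r y - 2 * B y = gg y" using gg_eq[of y] by simp
    have By: "Lam * gg y \<le> 3 * (8 * (1 + L) * B y * (1 - r y - 2 * B y))"
    proof -
      have "rho / 2 * gg y \<le> B y * gg y"
        using Bbig[of y] gpos[of y] y by (intro mult_right_mono) auto
      then have "24 * (1 + L) * (rho / 2 * gg y) \<le> 24 * (1 + L) * (B y * gg y)"
        using Lpos by (intro mult_left_mono) auto
      then show ?thesis unfolding e Lam_def by (simp add: algebra_simps)
    qed
    define Dg where "Dg = (- (a y * (24 - 16 * a y - 8 * r y)) - 8 * C y * (1 - r y - 2 * C y / n) - 3 * (8 * (1 + L) * B y * (1 - r y - 2 * B y)))"
    have dg: "(gg has_real_derivative Dg) (at y)" unfolding Dg_def by (rule der_gg[OF y0])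
    have dx: "(x has_real_derivative Dg + 0) (at y)" unfolding x_def[abs_def] by (rule DERIV_add[OF dg DERIV_const])
    have xe: "Lam * x y = Lam * gg y + kap" unfolding x_def using Lam_pos by (simp add: field_simps)
    have "Dg \<le> - Lam * x y" using ay Cy By xe unfolding Dg_def by linarith
    then show "\<exists>D. (x has_real_derivative D) (at y) \<and> D \<le> - Lam * x y"
      using dx by auto
  qed
  also have "exp (- Lam * ((U + s0) - U)) = 1 / (1 + Lam / kap)"
  proof -
    have "Lam / kap = (4 * rho * (3 * (1 + L))) / (4 * rho * (n * mu))" unfolding Lam_def kap_def
      by (simp add: algebra_simps)
    also have "\<dots> = 3 * (1 + L) / (n * mu)" using rho by (intro mult_divide_mult_cancel_left) simp
    finally have "Lam / kap = 3 * (1 + L) / (n * mu)" .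
    moreover have "- Lam * ((U + s0) - U) = - ln (1 + 3 * (1 + L) / (n * mu))"
      unfolding s0_def s0f_def Lam_def using Lpos rho by simp
    moreover have "0 < 1 + 3 * (1 + L) / (n * mu)" using Lpos mupos n_ge1 by (simp add: add_pos_nonneg)
    ultimately show ?thesis by (simp add: exp_minus inverse_eq_divide)
  qed
  finally have "x (U + s0) \<le> x U * (1 / (1 + Lam / kap))" .
  moreover have "x U \<le> 1 + kap / Lam"
    unfolding x_def gg_def using pos_a[of U] pos_B[of U] pos_C[of U] U0 by simp
  ultimately have "x (U + s0) \<le> (1 + kap / Lam) * (1 / (1 + Lam / kap))"
  proof -
    assume h1: "x (U + s0) \<le> x U * (1 / (1 + Lam / kap))" and h2: "x U \<le> 1 + kap / Lam"
    have "0 \<le> 1 / (1 + Lam / kap)" using Lam_pos kap_pos by (simp add: add_nonneg_nonneg)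
    then have "x U * (1 / (1 + Lam / kap)) \<le> (1 + kap / Lam) * (1 / (1 + Lam / kap))"
      by (rule mult_right_mono[OF h2])
    then show ?thesis using h1 by linarith
  qed
  also have "(1 + kap / Lam) * (1 / (1 + Lam / kap)) = kap / Lam"
  proof -
    have e1: "1 + kap / Lam = (Lam + kap) / Lam" using Lam_pos by (simp add: field_simps)
    have e2: "1 / (1 + Lam / kap) = kap / (Lam + kap)" using kap_pos Lam_pos by (simp add: field_simps)
    have "0 < Lam + kap" using kap_pos Lam_pos by simp
    then show ?thesis unfolding e1 e2 using Lam_pos by simp
  qed
  finally have "gg (U + s0) \<le> 0" unfolding x_def by simp
  with gpos[of "U + s0"] s0nn show False by simp
qed

end

context traj begin

abbreviation "T1v \<equiv> T1 d L rho a b c"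
abbreviation "T2v \<equiv> T2a d L rho eps a b c"

lemma set2_eq: "{t. U \<le> t \<and> bdot d L (a t) (b t) (c t) \<le> 0} = {t. U \<le> t \<and> 0 \<le> (\<lambda>t. - bdot d L (a t) (b t) (c t)) t}"
  by auto

lemma cont_bdot: "continuous_on {U..} (\<lambda>t. - bdot d L (a t) (b t) (c t))"
proof -
  have "continuous_on {0..} (\<lambda>t. - bdot d L (a t) (b t) (c t))"
    unfolding bdot_def rsum_def by (intro continuous_intros conts)
  then show ?thesis by (rule continuous_on_subset) (use phase1(2) in auto)
qed

lemma pos_mult_le0: "0 < (k::real) \<Longrightarrow> (k * g \<le> 0) = (g \<le> 0)"
  using mult_le_cancel_left_pos[of k g 0] by simp

lemma bdot_sign: "0 \<le> t \<Longrightarrow> (bdot d L (a t) (b t) (c t) \<le> 0) = (gg t \<le> 0)"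
proof -
  assume t: "0 \<le> t"
  have "0 < 8 * (1 + L) * b t" using pos_b[OF t] Lpos by simp
  then show ?thesis unfolding bdot_eq by (rule pos_mult_le0)
qed

lemma phase2:
  shows "{t. U \<le> t \<and> bdot d L (a t) (b t) (c t) \<le> 0} \<noteq> {}"
    and "U < T1v" "T1v \<le> U + s0f d L rho mu" "gg T1v = 0" "\<And>y. U \<le> y \<Longrightarrow> y < T1v \<Longrightarrow> 0 < gg y"
proof -
  obtain t0 where t0: "U \<le> t0" "t0 \<le> U + s0f d L rho mu" "gg t0 \<le> 0" using phase2_exists by blast
  have t00: "0 \<le> t0" using t0 phase1(2) by simp
  have ft0: "0 \<le> (\<lambda>t. - bdot d L (a t) (b t) (c t)) t0" using bdot_sign[OF t00] t0 by simp
  then show "{t. U \<le> t \<and> bdot d L (a t) (b t) (c t) \<le> 0} \<noteq> {}" using t0 by auto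
  have fU: "(\<lambda>t. - bdot d L (a t) (b t) (c t)) U < 0" using bdot_sign[of U] gg_U phase1(2) by simp
  have TT: "T1v = Inf {t. U \<le> t \<and> 0 \<le> (\<lambda>t. - bdot d L (a t) (b t) (c t)) t}"
    unfolding T1_def set2_eq ..
  note fh = first_hit[OF cont_bdot fU t0(1) ft0, folded TT]
  show "U < T1v" using fh(1) .
  show "T1v \<le> U + s0f d L rho mu" using fh(2) t0(2) by simp
  have "bdot d L (a T1v) (b T1v) (c T1v) = 0" using fh(3) by simp
  moreover have "0 < 8 * (1 + L) * b T1v" using pos_b[of T1v] fh(1) phase1(2) Lpos by simp
  ultimately show "gg T1v = 0" unfolding bdot_eq by (metis mult_eq_0_iff less_irrefl)
  fix y assume y: "U \<le> y" "y < T1v"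
  have "0 < bdot d L (a y) (b y) (c y)" using fh(4)[OF y] by simp
  then show "0 < gg y" using bdot_sign[of y] y phase1(2) by simp
qed

lemma T1_pos: "0 < T1v" using phase1(2) phase2(2) by simp
lemma T1_le_Tm: "T1v \<le> Tm" using phase2(3) phase1(3) by simp

lemma r_half: "0 \<le> y \<Longrightarrow> y \<le> T1v \<Longrightarrow> r y \<le> 1/2"
proof -
  assume y: "0 \<le> y" "y \<le> T1v"
  show ?thesis
  proof (cases "y < U")
    case True then show ?thesis using phase1(5)[of y] y rho by simp
  next
    case False
    then have "0 \<le> gg y" using phase2(5)[of y] phase2(4) y by (cases "y = T1v") auto
    moreover have "a y + C y \<le> rho / 2" using AC_small[of y] y T1_le_Tm by simp
    ultimately show ?thesis using r_eq[of y] rho unfolding gg_def by simp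
  qed
qed

lemma C_T1: "n * mu \<le> C T1v"
proof -
  have "C 0 * exp (4 * rho * (T1v - 0)) \<le> C T1v"
  proof (rule C_grow)
    show "0 \<le> (0::real)" by simp
    show "0 \<le> T1v" using T1_pos by simp
    show "4/n \<le> rho" by (rule n_rho)
    fix y assume "0 \<le> y" "y \<le> T1v" then show "r y \<le> 1 - rho" using r_half[of y] rho by simp
  qed
  moreover have "C 0 \<le> C 0 * exp (4 * rho * (T1v - 0))" using C0 n_ge1 mupos T1_pos rho by simp
  ultimately show ?thesis using C0 by simp
qed

lemma s1_nonneg: "0 \<le> s1f d eps mu"
proof -
  have "n * mu < 1" using C0_le p_lt1 by simp
  moreover have "0 < n * mu" using n_ge1 mupos by simp
  ultimately have "1 \<le> 1 / (n * mu)" by simp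
  then show ?thesis unfolding s1f_def using eps by simp
qed

lemma phase3_exists: "\<exists>t0. T1v \<le> t0 \<and> t0 \<le> T1v + s1f d eps mu \<and> 1 - eps \<le> r t0"
proof (rule ccontr)
  assume "\<not> ?thesis"
  then have lt: "\<And>y. T1v \<le> y \<Longrightarrow> y \<le> T1v + s1f d eps mu \<Longrightarrow> r y < 1 - eps" by force
  have "C T1v * exp (4 * eps * (T1v + s1f d eps mu - T1v)) \<le> C (T1v + s1f d eps mu)"
    by (rule C_grow) (use T1_pos s1_nonneg n_eps lt in \<open>auto intro: less_imp_le\<close>)
  moreover have "exp (4 * eps * (T1v + s1f d eps mu - T1v)) = 1 / (n * mu)"
  proof -
    have "4 * eps * (T1v + s1f d eps mu - T1v) = ln (1 / (n * mu))" unfolding s1f_def using eps by simp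
    moreover have "0 < n * mu" using n_ge1 mupos by simp
    ultimately show ?thesis by simp
  qed
  moreover have "1 \<le> C T1v * (1 / (n * mu))" using C_T1 n_ge1 mupos by (simp add: field_simps)
  moreover have "C (T1v + s1f d eps mu) \<le> r (T1v + s1f d eps mu)" using C_le_r T1_pos s1_nonneg by simp
  moreover have "r (T1v + s1f d eps mu) < 1 - eps" using lt s1_nonneg by simp
  ultimately show False using eps by simp
qed

lemma set3_eq: "{t. T1v \<le> t \<and> 1 - eps \<le> rsum d L (a t) (b t) (c t)} = {t. T1v \<le> t \<and> 1 - eps \<le> r t}"
  by (simp add: r_def)

lemma phase3:
  shows "{t. T1v \<le> t \<and> 1 - eps \<le> rsum d L (a t) (b t) (c t)} \<noteq> {}"
    and "T1v < T2v" "T2v \<le> T1v + s1f d eps mu" "r T2v = 1 - eps" "\<And>y. T1v \<le> y \<Longrightarrow> y < T2v \<Longrightarrow> r y < 1 - eps"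
proof -
  obtain t0 where t0: "T1v \<le> t0" "t0 \<le> T1v + s1f d eps mu" "1 - eps \<le> r t0" using phase3_exists by blast
  then show "{t. T1v \<le> t \<and> 1 - eps \<le> rsum d L (a t) (b t) (c t)} \<noteq> {}" unfolding set3_eq by blast
  have rT1: "r T1v < 1 - eps" using r_half[of T1v] T1_pos eps by simp
  have TT: "T2v = Inf {t. T1v \<le> t \<and> 1 - eps \<le> r t}" unfolding T2a_def set3_eq ..
  have cont: "continuous_on {T1v..} r" using cont_r by (rule continuous_on_subset) (use T1_pos in auto)
  note fh = first_hit[OF cont rT1 t0(1) t0(3), folded TT]
  show "T1v < T2v" "r T2v = 1 - eps" "\<And>y. T1v \<le> y \<Longrightarrow> y < T2v \<Longrightarrow> r y < 1 - eps" using fh by auto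
  show "T2v \<le> T1v + s1f d eps mu" using fh(2) t0(2) by simp
qed

lemma T2_pos: "0 < T2v" using T1_pos phase3(2) by simp

lemma r_le1: "0 \<le> y \<Longrightarrow> y \<le> T2v \<Longrightarrow> r y \<le> 1"
proof -
  assume y: "0 \<le> y" "y \<le> T2v"
  show ?thesis
  proof (cases "y \<le> T1v")
    case True then show ?thesis using r_half[of y] y by simp
  next
    case False
    then show ?thesis using phase3(5)[of y] phase3(4) y eps by (cases "y = T2v") auto
  qed
qed

lemma main_facts:
  shows "{t. 0 \<le> t \<and> rho \<le> rsum d L (a t) (b t) (c t)} \<noteq> {}"
    and "{t. U \<le> t \<and> bdot d L (a t) (b t) (c t) \<le> 0} \<noteq> {}"
    and "{t. T1v \<le> t \<and> 1 - eps \<le> rsum d L (a t) (b t) (c t)} \<noteq> {}"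
    and "0 < T1v" "T1v \<le> tau1 L mu + s0f d L rho mu"
    and "T1v < T2v" "T2v \<le> tau1 L mu + s0f d L rho mu + s1f d eps mu"
    and "mu \<le> a T2v" "a T2v \<le> mu * exp (24 * T2v)" "a T2v \<le> 1/12"
    and "2/3 - eps - a T2v \<le> (real d - 2) * c T2v" "(real d - 2) * c T2v \<le> 1 - eps"
    and "1/3 \<le> (real d - 2) * mu * exp (8 * T2v)"
    and "0 < b T2v" "0 < c T2v"
proof -
  show "{t. 0 \<le> t \<and> rho \<le> rsum d L (a t) (b t) (c t)} \<noteq> {}" by (rule phase1(1))
  show "{t. U \<le> t \<and> bdot d L (a t) (b t) (c t) \<le> 0} \<noteq> {}" by (rule phase2(1))
  show "{t. T1v \<le> t \<and> 1 - eps \<le> rsum d L (a t) (b t) (c t)} \<noteq> {}" by (rule phase3(1))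
  show "0 < T1v" by (rule T1_pos)
  show "T1v \<le> tau1 L mu + s0f d L rho mu" by (rule T1_le_Tm)
  show "T1v < T2v" by (rule phase3(2))
  show T2b: "T2v \<le> tau1 L mu + s0f d L rho mu + s1f d eps mu" using phase3(3) T1_le_Tm by simp
  have "a 0 \<le> a T2v" by (rule a_mono) (use T2_pos r_le1 in auto)
  then show "mu \<le> a T2v" using init by simp
  show aup: "a T2v \<le> mu * exp (24 * T2v)" using a_upper T2_pos by simp
  also have "\<dots> \<le> mu * exp (24 * (tau1 L mu + s0f d L rho mu + s1f d eps mu))"
    using T2b mupos by simp
  also have "\<dots> \<le> 1/12" by (rule a4)
  finally have a12: "a T2v \<le> 1/12" .
  then show "a T2v \<le> 1/12" .
  have BT2: "B T2v \<le> 1/3" using B_le T2_pos by simp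
  show "2/3 - eps - a T2v \<le> (real d - 2) * c T2v"
    using phase3(4) r_eq[of T2v] BT2 unfolding C_def by simp
  show "(real d - 2) * c T2v \<le> 1 - eps" using C_le_r[of T2v] T2_pos phase3(4) unfolding C_def by simp
  have "C T2v \<le> n * mu * exp (8 * T2v)" using C_upper T2_pos by simp
  moreover have "2/3 - eps - a T2v \<le> C T2v" using phase3(4) r_eq[of T2v] BT2 by simp
  ultimately show "1/3 \<le> (real d - 2) * mu * exp (8 * T2v)" using a12 eps by simp
  show "0 < b T2v" "0 < c T2v" using pos_b pos_c T2_pos by auto
qed

end

lemma ln_le_sum3:
  fixes A D p :: real
  assumes "0 < A" "0 < D" "0 < p" "X \<le> A * D / p" "0 < X"
  shows "ln X \<le> ln A + ln D + ln (1 / p)"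
proof -
  have "ln X \<le> ln (A * D / p)" using assms by simp
  also have "\<dots> = ln A + ln D + ln (1 / p)"
    using assms by (simp add: ln_div ln_mult)
  finally show ?thesis .
qed

lemma bounds_d:
  fixes D L K1 K2 c0 rho eps p mu :: real and d :: nat
  assumes D: "D = real d" "3 \<le> d" and K: "0 < K1" "0 < K2"
    and LL: "K1 * ln D \<le> L" "L \<le> K2 * D"
    and c0: "0 < c0" and rho: "0 < rho" and eps: "0 < eps"
    and R1: "c0 * ln (ln D) + ln (10 * (1 + K2)^2) \<le> 2 * ln D"
    and psmall: "ln D powr (-c0) < 1"
    and p_def: "p = ln D powr (-c0)" and mu_def: "mu = p / (D + L)"
  shows "tau1 L mu \<le> 1 / (2 * K1)" "s0f d L rho mu \<le> 1 / (4 * K1 * rho)"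
    "s1f d eps mu \<le> (ln (3 * (1 + K2)) + c0 * ln (ln D)) / (4 * eps)"
    "(real d - 2) * mu \<le> p" "mu \<le> p / D" "ln (1 / p) = c0 * ln (ln D)" "0 < p" "0 < mu"
    "p / (3 * (1 + K2)) \<le> (real d - 2) * mu"
proof -
  have D3: "3 \<le> D" using D by simp
  have lnD: "0 < ln D" using D3 by simp
  have p0: "0 < p" unfolding p_def using lnD by simp
  then show "0 < p" .
  have p1: "p < 1" using psmall unfolding p_def .
  have Lpos: "0 < L" using LL(1) K(1) lnD by (smt (verit) mult_pos_pos)
  have DL: "0 < D + L" using D3 Lpos by simp
  have mu0: "0 < mu" unfolding mu_def using p0 DL by simp
  then show "0 < mu" .
  have ell: "ln (1 / p) = c0 * ln (ln D)"
    unfolding p_def using lnD by (simp add: ln_div ln_powr)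
  then show "ln (1 / p) = c0 * ln (ln D)" .
  have ln10: "ln (3 * (1 + K2)) \<le> ln (10 * (1 + K2)^2)" and ln10': "ln (1 + K2) \<le> ln (10 * (1 + K2)^2)"
  proof -
    have "3 * (1 + K2) \<le> 10 * (1 + K2)^2" "1 + K2 \<le> 10 * (1 + K2)^2"
      using K(2) by (simp_all add: power2_eq_square algebra_simps)
    moreover have "0 < 3 * (1 + K2)" "0 < 1 + K2" using K(2) by simp_all
    ultimately show "ln (3 * (1 + K2)) \<le> ln (10 * (1 + K2)^2)" "ln (1 + K2) \<le> ln (10 * (1 + K2)^2)"
      by simp_all
  qed
  have key: "ln (10 * (1 + K2)^2) + ln D + ln (1 / p) \<le> 3 * ln D" using R1 ell by simp
  have DLle: "D + L \<le> (1 + K2) * D" using LL(2) by (simp add: algebra_simps)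
  have n3: "D / 3 \<le> real d - 2" using D by simp
  have npos: "0 < real d - 2" using D by simp
  have e1: "1 / ((1 + L) * mu) = (D + L) / ((1 + L) * p)" unfolding mu_def using DL p0 Lpos by simp
  have X1: "(D + L) / ((1 + L) * p) \<le> (1 + K2) * D / p"
  proof -
    have pp: "p \<le> (1 + L) * p" using p0 Lpos by (simp add: algebra_simps)
    have "(D + L) / ((1 + L) * p) \<le> (D + L) / p"
      by (rule divide_left_mono[OF pp]) (use DL p0 Lpos in auto)
    also have "\<dots> \<le> (1 + K2) * D / p" using DLle p0 by (simp add: divide_right_mono)
    finally show ?thesis .
  qed
  have X0: "1 \<le> (D + L) / ((1 + L) * p)"
  proof -
    have "(1 + L) * p \<le> D + L" using p1 D3 Lpos by (smt (verit) mult_le_cancel_left1 mult.commute mult_right_le_one_le)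
    then show ?thesis using p0 Lpos by simp
  qed
  have Xle: "ln (1 / ((1 + L) * mu)) \<le> 3 * ln D"
  proof -
    have "ln (1 / ((1 + L) * mu)) \<le> ln (1 + K2) + ln D + ln (1 / p)"
      unfolding e1 by (rule ln_le_sum3) (use K D3 p0 X1 X0 in auto)
    then show ?thesis using ln10' key by simp
  qed
  have Xge: "0 \<le> ln (1 / ((1 + L) * mu))" unfolding e1 using X0 by simp
  have "tau1 L mu \<le> (3 * ln D) / (6 * (K1 * ln D))"
    unfolding tau1_def by (rule frac_le) (use Xle Xge lnD K LL in auto)
  also have "\<dots> = 1 / (2 * K1)" using lnD K by simp
  finally show "tau1 L mu \<le> 1 / (2 * K1)" .
  have e2: "3 * (1 + L) / ((real d - 2) * mu) = 3 * (1 + L) * (D + L) / ((real d - 2) * p)"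
    unfolding mu_def using DL p0 npos by simp
  have Y1: "3 * (1 + L) * (D + L) / ((real d - 2) * p) \<le> 9 * (1 + K2)^2 * D / p"
  proof -
    have a1: "1 + L \<le> (1 + K2) * D" using LL(2) D3 by (simp add: algebra_simps)
    have "3 * (1 + L) * (D + L) \<le> 3 * ((1 + K2) * D) * ((1 + K2) * D)"
      using a1 DLle Lpos DL by (intro mult_mono) auto
    then have "3 * (1 + L) * (D + L) / ((real d - 2) * p) \<le> 3 * ((1 + K2) * D) * ((1 + K2) * D) / ((real d - 2) * p)"
      using npos p0 by (simp add: divide_right_mono)
    also have "\<dots> \<le> 3 * ((1 + K2) * D) * ((1 + K2) * D) / ((D / 3) * p)"
      using npos p0 n3 D3 K by (intro divide_left_mono mult_right_mono) auto
    also have "\<dots> = 9 * (1 + K2)^2 * D / p" using D3 p0 by (simp add: field_simps power2_eq_square)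
    finally show ?thesis .
  qed
  have Y2: "1 + 9 * (1 + K2)^2 * D / p \<le> 10 * (1 + K2)^2 * D / p"
  proof -
    define w where "w = (1 + K2)^2 * D / p"
    have "1 \<le> (1 + K2)^2" using K by simp
    moreover have "1 \<le> D / p" using D3 p0 p1 by simp
    ultimately have "1 * 1 \<le> (1 + K2)^2 * (D / p)" by (intro mult_mono) auto
    then have w1: "1 \<le> w" unfolding w_def by simp
    have ineq: "1 + 9 * w \<le> 10 * w" using w1 by linarith
    have e9: "9 * (1 + K2)^2 * D / p = 9 * w" and e10: "10 * (1 + K2)^2 * D / p = 10 * w"
      unfolding w_def by simp_all
    show ?thesis unfolding e9 e10 by (rule ineq)
  qed
  have Yle: "ln (1 + 3 * (1 + L) / ((real d - 2) * mu)) \<le> 3 * ln D"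
  proof -
    have pos: "0 < 1 + 3 * (1 + L) / ((real d - 2) * mu)" using Lpos npos mu0 by (simp add: add_pos_nonneg)
    have Xb: "1 + 3 * (1 + L) / ((real d - 2) * mu) \<le> 10 * (1 + K2)^2 * D / p"
      unfolding e2 by (rule order_trans[OF add_left_mono[OF Y1] Y2])
    have A0: "0 < 10 * (1 + K2)^2" using K by simp
    have D0: "0 < D" using D3 by simp
    have "ln (1 + 3 * (1 + L) / ((real d - 2) * mu)) \<le> ln (10 * (1 + K2)^2) + ln D + ln (1 / p)"
      by (rule ln_le_sum3[OF A0 D0 p0 Xb pos])
    then show ?thesis using key by simp
  qed
  have Yge: "0 \<le> ln (1 + 3 * (1 + L) / ((real d - 2) * mu))" using Lpos npos mu0 by simp
  have "s0f d L rho mu \<le> (3 * ln D) / (12 * (K1 * ln D) * rho)"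
    unfolding s0f_def by (rule frac_le) (use Yle Yge lnD K LL rho in auto)
  also have "\<dots> = 1 / (4 * K1 * rho)" using lnD K rho by simp
  finally show "s0f d L rho mu \<le> 1 / (4 * K1 * rho)" .
  have e3: "1 / ((real d - 2) * mu) = (D + L) / ((real d - 2) * p)" unfolding mu_def using DL p0 npos by simp
  have Z1: "(D + L) / ((real d - 2) * p) \<le> 3 * (1 + K2) / p"
  proof -
    have "(D + L) / ((real d - 2) * p) \<le> ((1 + K2) * D) / ((D / 3) * p)"
      using DLle npos p0 n3 D3 DL by (intro frac_le mult_right_mono) auto
    also have "\<dots> = 3 * (1 + K2) / p" using D3 p0 by (simp add: field_simps)
    finally show ?thesis .
  qed
  have Zle: "ln (1 / ((real d - 2) * mu)) \<le> ln (3 * (1 + K2)) + ln (1 / p)"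
  proof -
    have "ln (1 / ((real d - 2) * mu)) \<le> ln (3 * (1 + K2) / p)"
    proof -
      have "0 < (D + L) / ((real d - 2) * p)" using DL npos p0 by simp
      then show ?thesis unfolding e3 using Z1 by simp
    qed
    also have "\<dots> = ln (3 * (1 + K2)) + ln (1 / p)" using K p0 by (simp add: ln_div)
    finally show ?thesis .
  qed
  show "s1f d eps mu \<le> (ln (3 * (1 + K2)) + c0 * ln (ln D)) / (4 * eps)"
    unfolding s1f_def using Zle ell eps by (simp add: divide_right_mono)
  show "(real d - 2) * mu \<le> p"
  proof -
    have "(real d - 2) * mu = p * ((real d - 2) / (D + L))" unfolding mu_def by simp
    also have "\<dots> \<le> p * 1" using p0 DL Lpos D by (intro mult_left_mono) auto
    finally show ?thesis by simp
  qed
  show "mu \<le> p / D" unfolding mu_def using p0 D3 Lpos by (intro divide_left_mono) auto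
  show "p / (3 * (1 + K2)) \<le> (real d - 2) * mu"
  proof -
    have "p * (D / 3) / ((1 + K2) * D) = (p / 3) * D / ((1 + K2) * D)" by simp
    also have "\<dots> = (p / 3) / (1 + K2)" using D3 by (intro mult_divide_mult_cancel_right) simp
    also have "\<dots> = p / (3 * (1 + K2))" by simp
    finally have "p / (3 * (1 + K2)) = p * (D / 3) / ((1 + K2) * D)" by simp
    also have "\<dots> \<le> p * (real d - 2) / (D + L)"
      using p0 n3 DLle DL npos by (intro frac_le mult_left_mono) auto
    also have "\<dots> = (real d - 2) * mu" unfolding mu_def by simp
    finally show ?thesis .
  qed
qed

lemma exp_bound:
  fixes Tm s1 M Lc ell c0 eps mu p D :: real
  assumes "Tm \<le> M" "s1 \<le> (Lc + ell) / (4 * eps)" "mu \<le> p / D" "p \<le> 1" "ell = c0 * ln (ln D)"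
    "0 < ln D" "0 < eps" "0 < D" "0 < mu" "0 < p"
  shows "mu * exp (24 * (Tm + s1)) \<le> exp (24 * M) * exp (6 * Lc / eps) * (ln D powr (6 * c0 / eps) / D)"
proof -
  have "24 * (Tm + s1) \<le> 24 * M + 6 * Lc / eps + (6 * c0 / eps) * ln (ln D)"
  proof -
    have "24 * s1 \<le> 24 * ((Lc + ell) / (4 * eps))" using assms(2) by (rule mult_left_mono) simp
    also have "\<dots> = 6 * Lc / eps + (6 * c0 / eps) * ln (ln D)" using assms(5,7) by (simp add: field_simps)
    finally show ?thesis using assms(1) by simp
  qed
  then have "exp (24 * (Tm + s1)) \<le> exp (24 * M) * exp (6 * Lc / eps) * exp ((6 * c0 / eps) * ln (ln D))"
    by (simp add: exp_add[symmetric])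
  also have "exp ((6 * c0 / eps) * ln (ln D)) = ln D powr (6 * c0 / eps)"
    using assms(6) by (simp add: powr_def)
  finally have e: "exp (24 * (Tm + s1)) \<le> exp (24 * M) * exp (6 * Lc / eps) * ln D powr (6 * c0 / eps)" .
  have "mu \<le> 1 / D" using assms(3,4,8) by (smt (verit) divide_right_mono)
  then have "mu * exp (24 * (Tm + s1)) \<le> (1 / D) * (exp (24 * M) * exp (6 * Lc / eps) * ln D powr (6 * c0 / eps))"
    using e assms(8,9) by (intro mult_mono) auto
  then show ?thesis by simp
qed

lemma per_d:
  fixes d :: nat and L c0 rho eps K1 K2 M Lc k Kc :: real and a b c :: "real \<Rightarrow> real"
  assumes c0: "0 < c0" and rho: "0 < rho" "rho < 1/12" and eps: "0 < eps" "eps \<le> 1/4"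
    and K: "0 < K1" "0 < K2"
    and M_def: "M = 1/(2*K1) + 1/(4*K1*rho)" and Lc_def: "Lc = ln (3*(1+K2))" and k_def: "k = 6*c0/eps"
    and Kc_def: "Kc = exp (24*M) * exp (6*Lc/eps)"
    and ode: "\<forall>t\<ge>0.
           (a has_real_derivative adot d L (a t) (b t) (c t)) (at t within {0..}) \<and>
           (b has_real_derivative bdot d L (a t) (b t) (c t)) (at t within {0..}) \<and>
           (c has_real_derivative cdot d L (a t) (b t) (c t)) (at t within {0..})"
    and init: "a 0 = mu0 c0 L d \<and> b 0 = mu0 c0 L d \<and> c 0 = mu0 c0 L d"
    and G1: "3 \<le> d" and G2: "K1 * ln (real d) \<le> L \<and> L \<le> K2 * real d"
    and G3: "c0 * ln (ln (real d)) + ln (10 * (1 + K2)^2) \<le> 2 * ln (real d)"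
    and G4: "ln (real d) powr (-c0) * (exp (24*M) + exp (8*M)) < rho / 2"
    and G5: "4/rho \<le> real d - 2 \<and> 4/eps \<le> real d - 2"
    and G6: "Kc * (ln (real d) powr k / real d) < 1/12"
    and G7: "max 1 (2 * ln 3 + 16 * M) \<le> c0 * ln (ln (real d))"
  shows "{t. 0 \<le> t \<and> rho \<le> rsum d L (a t) (b t) (c t)} \<noteq> {}
        \<and> {t. T1a d L rho a b c \<le> t \<and> bdot d L (a t) (b t) (c t) \<le> 0} \<noteq> {}
        \<and> {t. T1 d L rho a b c \<le> t \<and> 1 - eps \<le> rsum d L (a t) (b t) (c t)} \<noteq> {}"
    and "ln (1 / rho0 c0 d) / 16 \<le> T2a d L rho eps a b c - T1 d L rho a b c"
    and "T2a d L rho eps a b c - T1 d L rho a b c \<le> (M + (Lc + 1) / (4 * eps)) * ln (1 / rho0 c0 d)"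
    and "1 \<le> ln (1 / rho0 c0 d)" "ln (1 / rho0 c0 d) = c0 * ln (ln (real d))"
    and "2/3 - eps - a (T2a d L rho eps a b c) \<le> (real d - 2) * c (T2a d L rho eps a b c)"
    and "0 \<le> a (T2a d L rho eps a b c)" "a (T2a d L rho eps a b c) \<le> Kc * (ln (real d) powr k / real d)"
    and "1 / (3 * real d) \<le> c (T2a d L rho eps a b c)" "c (T2a d L rho eps a b c) \<le> 3 / real d"
    and "0 \<le> ln (a (T2a d L rho eps a b c) / mu0 c0 L d) / ln (1 / rho0 c0 d)"
    and "ln (a (T2a d L rho eps a b c) / mu0 c0 L d) / ln (1 / rho0 c0 d) \<le> 24 * M + 6 * (Lc + 1) / eps"
    and "a (T2a d L rho eps a b c) = mu0 c0 L d * rho0 c0 d powr (- (ln (a (T2a d L rho eps a b c) / mu0 c0 L d) / ln (1 / rho0 c0 d)))"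
    and "a (T2a d L rho eps a b c) = ln (real d) powr (c0 * (ln (a (T2a d L rho eps a b c) / mu0 c0 L d) / ln (1 / rho0 c0 d) - 1)) / (real d + L)"
    and "0 \<le> align d (a (T2a d L rho eps a b c)) (b (T2a d L rho eps a b c)) (c (T2a d L rho eps a b c))"
    and "align d (a (T2a d L rho eps a b c)) (b (T2a d L rho eps a b c)) (c (T2a d L rho eps a b c)) \<le> 3 * sqrt (real d) * a (T2a d L rho eps a b c)"
proof -
  define D where "D = real d"
  define p where "p = rho0 c0 d"
  define mu where "mu = mu0 c0 L d"
  define ell where "ell = ln (1 / p)"
  have D3: "3 \<le> D" using G1 unfolding D_def by simp
  have lnD: "0 < ln D" using D3 by simp
  have p_eq: "p = ln D powr (-c0)" unfolding p_def D_def rho0_def ..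
  have mu_eq: "mu = p / (D + L)" unfolding mu_def p_def D_def mu0_def ..
  have p0: "0 < p" unfolding p_eq using lnD by simp
  have M0: "0 \<le> M" unfolding M_def using K rho by simp
  have Lc0: "0 \<le> Lc" unfolding Lc_def using K by simp
  have exps: "2 \<le> exp (24*M) + exp (8*M)" using M0 by (smt (verit) one_le_exp_iff)
  have pG4: "p * (exp (24*M) + exp (8*M)) < rho / 2" using G4 unfolding p_eq D_def .
  have p_rho: "p < rho / 4"
  proof -
    have "p * 2 \<le> p * (exp (24*M) + exp (8*M))" using exps p0 by (intro mult_left_mono) auto
    then show ?thesis using pG4 by simp
  qed
  have p1: "ln D powr (-c0) < 1" using p_rho rho unfolding p_eq by simp
  have Lb: "K1 * ln D \<le> L" "L \<le> K2 * D" using G2 unfolding D_def by auto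
  have G3': "c0 * ln (ln D) + ln (10 * (1 + K2)^2) \<le> 2 * ln D" using G3 unfolding D_def .
  note bd = bounds_d[OF D_def G1 K(1) K(2) Lb(1) Lb(2) c0 rho(1) eps(1) G3' p1 p_eq mu_eq]
  have tau1b: "tau1 L mu \<le> 1 / (2 * K1)" and s0b: "s0f d L rho mu \<le> 1 / (4 * K1 * rho)"
    and s1b: "s1f d eps mu \<le> (Lc + c0 * ln (ln D)) / (4 * eps)"
    and nmu: "(real d - 2) * mu \<le> p" and mupD: "mu \<le> p / D" and ell_eq: "ell = c0 * ln (ln D)"
    and mu0: "0 < mu" and nmu_low: "p / (3 * (1 + K2)) \<le> (real d - 2) * mu"
    using bd unfolding ell_def Lc_def by auto
  have Tm: "tau1 L mu + s0f d L rho mu \<le> M" unfolding M_def using tau1b s0b by simp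
  have Lpos: "0 < L" using Lb(1) K lnD by (smt (verit) mult_pos_pos)
  have mup: "mu \<le> p" using mupD D3 p0 by (smt (verit) divide_le_eq_1 le_divide_eq_1 mult_le_cancel_left1 div_by_1 divide_left_mono)
  have a3: "mu * exp (24 * (tau1 L mu + s0f d L rho mu)) + (real d - 2) * mu * exp (8 * (tau1 L mu + s0f d L rho mu)) \<le> rho / 2"
  proof -
    have "mu * exp (24 * (tau1 L mu + s0f d L rho mu)) \<le> p * exp (24 * M)"
      using mup Tm mu0 by (intro mult_mono) auto
    moreover have "(real d - 2) * mu * exp (8 * (tau1 L mu + s0f d L rho mu)) \<le> p * exp (8 * M)"
      using nmu Tm mu0 p0 by (intro mult_mono) auto
    ultimately show ?thesis using pG4 by (simp add: algebra_simps)
  qed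
  have s1b': "s1f d eps mu \<le> (Lc + ell) / (4 * eps)" using s1b ell_eq by simp
  have expb: "mu * exp (24 * (tau1 L mu + s0f d L rho mu + s1f d eps mu)) \<le> Kc * (ln D powr k / D)"
    unfolding Kc_def k_def
    by (rule exp_bound[OF Tm s1b' mupD _ ell_eq lnD eps(1) _ mu0 p0]) (use p_rho rho D3 in auto)
  have a4: "mu * exp (24 * (tau1 L mu + s0f d L rho mu + s1f d eps mu)) \<le> 1 / 12"
  proof -
    have "Kc * (ln D powr k / D) < 1/12" using G6 unfolding D_def .
    then show ?thesis by (rule order_trans[OF expb less_imp_le])
  qed
  have psm: "mu * (real d + L) < rho"
  proof -
    have "mu * (real d + L) = p" unfolding mu_eq D_def using D3 Lpos unfolding D_def by simp
    then show ?thesis using p_rho rho by simp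
  qed
  have tr: "traj d L rho eps mu a b c"
    unfolding traj_def using G1 Lpos mu0 rho eps ode init G5 psm a3 a4 unfolding mu_def by auto
  note mf = traj.main_facts[OF tr]
  show "{t. 0 \<le> t \<and> rho \<le> rsum d L (a t) (b t) (c t)} \<noteq> {}
        \<and> {t. T1a d L rho a b c \<le> t \<and> bdot d L (a t) (b t) (c t) \<le> 0} \<noteq> {}
        \<and> {t. T1 d L rho a b c \<le> t \<and> 1 - eps \<le> rsum d L (a t) (b t) (c t)} \<noteq> {}"
    using mf(1-3) by blast

  define T1v where "T1v = T1 d L rho a b c"
  define T2v where "T2v = T2a d L rho eps a b c"
  define A2 where "A2 = a T2v"
  note mf' = mf[folded T1v_def T2v_def, folded A2_def]
  have T1pos: "0 < T1v" and T1le: "T1v \<le> tau1 L mu + s0f d L rho mu" and T12: "T1v < T2v"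
    and T2le: "T2v \<le> tau1 L mu + s0f d L rho mu + s1f d eps mu"
    and muA: "mu \<le> A2" and Aup: "A2 \<le> mu * exp (24 * T2v)" and A12: "A2 \<le> 1/12"
    and Clow: "2/3 - eps - A2 \<le> (real d - 2) * c T2v" and Cup: "(real d - 2) * c T2v \<le> 1 - eps"
    and e8: "1/3 \<le> (real d - 2) * mu * exp (8 * T2v)" and bpos: "0 < b T2v" and cpos: "0 < c T2v"
    using mf' by auto
  have ell1: "1 \<le> ell" and ell2: "2 * ln 3 + 16 * M \<le> ell" using G7 ell_eq unfolding D_def by auto
  have ell0: "0 < ell" using ell1 by simp
  have lnp: "ln p = - ell" unfolding ell_def using p0 by (simp add: ln_div)
  have "1/3 \<le> p * exp (8 * T2v)"
    using e8 nmu by (smt (verit) exp_gt_zero mult_right_mono)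
  then have "1 / (3 * p) \<le> exp (8 * T2v)" using p0 by (simp add: field_simps)
  then have "ln (1 / (3 * p)) \<le> 8 * T2v" using p0 by (simp add: ln_le_cancel_iff[symmetric])
  moreover have "ln (1 / (3 * p)) = ell - ln 3" unfolding ell_def using p0 by (simp add: ln_div ln_mult)
  ultimately have T2low: "ell - ln 3 \<le> 8 * T2v" by simp
  have T1M: "T1v \<le> M" using T1le Tm by simp
  have lowb: "ell / 16 \<le> T2v - T1v" using T2low T1M ell2 by simp
  have u1: "(Lc + ell) / (4 * eps) \<le> (Lc + 1) / (4 * eps) * ell"
  proof -
    have "0 \<le> Lc * (ell - 1)" using Lc0 ell1 by simp
    then have "Lc + ell \<le> (Lc + 1) * ell" by (simp add: algebra_simps)
    then have "(Lc + ell) / (4 * eps) \<le> (Lc + 1) * ell / (4 * eps)" using eps by (simp add: divide_right_mono)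
    then show ?thesis by simp
  qed
  have u2: "M \<le> M * ell" using M0 ell1 by (metis mult.right_neutral mult_left_mono)
  have T2up: "T2v \<le> (M + (Lc + 1) / (4 * eps)) * ell"
    using T2le Tm s1b' u1 u2 by (simp add: algebra_simps)
  have upb: "T2v - T1v \<le> (M + (Lc + 1) / (4 * eps)) * ell" using T2up T1pos by simp
  show "ln (1 / rho0 c0 d) / 16 \<le> T2a d L rho eps a b c - T1 d L rho a b c"
    using lowb unfolding ell_def p_def T1v_def T2v_def .
  show "T2a d L rho eps a b c - T1 d L rho a b c \<le> (M + (Lc + 1) / (4 * eps)) * ln (1 / rho0 c0 d)"
    using upb unfolding ell_def p_def T1v_def T2v_def .
  show "1 \<le> ln (1 / rho0 c0 d)" using ell1 unfolding ell_def p_def .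
  show "ln (1 / rho0 c0 d) = c0 * ln (ln (real d))" using ell_eq unfolding ell_def p_def D_def .
  show "2/3 - eps - a (T2a d L rho eps a b c) \<le> (real d - 2) * c (T2a d L rho eps a b c)"
    using Clow unfolding A2_def T2v_def .
  show "0 \<le> a (T2a d L rho eps a b c)" using muA mu0 unfolding A2_def T2v_def by simp
  have "mu * exp (24 * T2v) \<le> mu * exp (24 * (tau1 L mu + s0f d L rho mu + s1f d eps mu))"
    using T2le mu0 by simp
  then have "A2 \<le> mu * exp (24 * (tau1 L mu + s0f d L rho mu + s1f d eps mu))"
    by (rule order_trans[OF Aup])
  then have "A2 \<le> Kc * (ln D powr k / D)" using expb by simp
  then show "a (T2a d L rho eps a b c) \<le> Kc * (ln (real d) powr k / real d)"
    unfolding A2_def T2v_def D_def .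
  have nc1: "1/3 \<le> (real d - 2) * c T2v" using Clow A12 eps by simp
  have nD: "real d - 2 \<le> D" "D \<le> 3 * (real d - 2)" unfolding D_def using G1 by auto
  have "1/3 \<le> D * c T2v" using nc1 nD cpos by (smt (verit) mult_right_mono)
  then show "1 / (3 * real d) \<le> c (T2a d L rho eps a b c)"
    unfolding T2v_def D_def using D3 unfolding D_def by (simp add: field_simps)
  have "D * c T2v \<le> (3 * (real d - 2)) * c T2v" using cpos by (intro mult_right_mono[OF nD(2)]) simp
  then have "D * c T2v \<le> 3 * ((real d - 2) * c T2v)" by (simp only: mult.assoc)
  then have "D * c T2v \<le> 3" using Cup eps by simp
  then show "c (T2a d L rho eps a b c) \<le> 3 / real d"
    unfolding T2v_def D_def using D3 unfolding D_def by (simp add: field_simps)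
  define h where "h = ln (A2 / mu) / ell"
  have Amu1: "1 \<le> A2 / mu" using muA mu0 by simp
  have h0: "0 \<le> h" unfolding h_def using Amu1 ell0 by simp
  have "A2 / mu \<le> exp (24 * T2v)" using Aup mu0 by (simp add: field_simps)
  then have "ln (A2 / mu) \<le> 24 * T2v" using Amu1 by (simp add: ln_le_cancel_iff[symmetric])
  also have "\<dots> \<le> 24 * ((M + (Lc + 1) / (4 * eps)) * ell)" using T2up by simp
  finally have "h \<le> 24 * (M + (Lc + 1) / (4 * eps))" unfolding h_def using ell0 by (simp add: field_simps)
  moreover have "24 * (M + (Lc + 1) / (4 * eps)) = 24 * M + 6 * (Lc + 1) / eps" using eps by (simp add: field_simps)
  ultimately have hb: "h \<le> 24 * M + 6 * (Lc + 1) / eps" by simp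
  have hl: "h * ell = ln (A2 / mu)" unfolding h_def using ell0 by simp
  have ppow: "p powr (- h) = A2 / mu"
  proof -
    have "p powr (- h) = exp (- h * ln p)" using p0 by (simp add: powr_def)
    also have "\<dots> = exp (h * ell)" using lnp by simp
    also have "\<dots> = A2 / mu" using hl Amu1 by simp
    finally show ?thesis .
  qed
  show "0 \<le> ln (a (T2a d L rho eps a b c) / mu0 c0 L d) / ln (1 / rho0 c0 d)"
    using h0 unfolding h_def A2_def T2v_def ell_def p_def mu_def .
  show "ln (a (T2a d L rho eps a b c) / mu0 c0 L d) / ln (1 / rho0 c0 d) \<le> 24 * M + 6 * (Lc + 1) / eps"
    using hb unfolding h_def A2_def T2v_def ell_def p_def mu_def .
  have eqA: "A2 = mu * p powr (- h)" using ppow mu0 by simp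
  then show "a (T2a d L rho eps a b c) = mu0 c0 L d * rho0 c0 d powr (- (ln (a (T2a d L rho eps a b c) / mu0 c0 L d) / ln (1 / rho0 c0 d)))"
    unfolding h_def A2_def T2v_def ell_def p_def mu_def .
  have "ln D powr (c0 * (h - 1)) = exp (c0 * (h - 1) * ln (ln D))" using lnD by (simp add: powr_def)
  also have "\<dots> = exp (h * ell - ell)" using ell_eq by (simp add: algebra_simps)
  also have "\<dots> = (A2 / mu) * p"
  proof -
    have "ell = - ln p" using lnp by simp
    then have ee: "exp ell = 1 / p" using p0 by (simp add: exp_minus inverse_eq_divide)
    show ?thesis using hl Amu1 p0 by (simp add: exp_diff ee)
  qed
  finally have "ln D powr (c0 * (h - 1)) / (D + L) = (A2 / mu) * (p / (D + L))" by simp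
  also have "\<dots> = A2" using mu_eq[symmetric] mu0 by simp
  finally show "a (T2a d L rho eps a b c) = ln (real d) powr (c0 * (ln (a (T2a d L rho eps a b c) / mu0 c0 L d) / ln (1 / rho0 c0 d) - 1)) / (real d + L)"
    unfolding h_def A2_def T2v_def ell_def p_def mu_def D_def by simp
  have A0: "0 \<le> A2" using muA mu0 by simp
  define n where "n = real d - 2"
  have n0: "0 < n" unfolding n_def using G1 by simp
  have Spos: "0 < sqrt n * c T2v" using n0 cpos by simp
  have Sle: "sqrt n * c T2v \<le> sqrt (A2^2 + (b T2v)^2 + n * (c T2v)^2)"
  proof -
    have "sqrt n * c T2v = sqrt (n * (c T2v)^2)" using cpos n0 by (simp add: real_sqrt_mult)
    also have "\<dots> \<le> sqrt (A2^2 + (b T2v)^2 + n * (c T2v)^2)" by simp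
    finally show ?thesis .
  qed
  have al_def': "align d A2 (b T2v) (c T2v) = A2 / sqrt (A2^2 + (b T2v)^2 + n * (c T2v)^2)"
    unfolding align_def n_def ..
  have al0: "0 \<le> align d A2 (b T2v) (c T2v)" unfolding al_def'
    by (rule divide_nonneg_nonneg[OF A0]) (use Spos Sle in linarith)
  have "align d A2 (b T2v) (c T2v) \<le> A2 / (sqrt n * c T2v)"
    unfolding al_def' by (rule frac_le[OF A0 order_refl Spos Sle])
  also have "\<dots> \<le> 3 * sqrt D * A2"
  proof -
    have "sqrt n \<le> sqrt D" using nD unfolding n_def by simp
    then have "sqrt n * sqrt n * c T2v \<le> sqrt D * sqrt n * c T2v" using cpos n0 by (intro mult_right_mono) auto
    moreover have "sqrt n * sqrt n = n" using n0 by simp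
    ultimately have "n * c T2v \<le> sqrt D * (sqrt n * c T2v)" by (simp add: algebra_simps)
    then have "1 \<le> 3 * sqrt D * (sqrt n * c T2v)" using nc1 unfolding n_def by simp
    then have "A2 * 1 \<le> A2 * (3 * sqrt D * (sqrt n * c T2v))" using A0 by (intro mult_left_mono) auto
    then show ?thesis using Spos by (simp add: divide_le_eq algebra_simps)
  qed
  finally have al1: "align d A2 (b T2v) (c T2v) \<le> 3 * sqrt D * A2" .
  show "0 \<le> align d (a (T2a d L rho eps a b c)) (b (T2a d L rho eps a b c)) (c (T2a d L rho eps a b c))"
    using al0 unfolding A2_def T2v_def .
  show "align d (a (T2a d L rho eps a b c)) (b (T2a d L rho eps a b c)) (c (T2a d L rho eps a b c)) \<le> 3 * sqrt (real d) * a (T2a d L rho eps a b c)"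
    using al1 unfolding A2_def T2v_def D_def .
qed

theorem propositionB5:
  fixes lam :: "nat \<Rightarrow> real" and c0 rho eps :: real
    and a b c :: "nat \<Rightarrow> real \<Rightarrow> real"
  assumes c0: "0 < c0"
      and rho: "0 < rho" "rho < 1/12"
      and eps: "0 < eps" "eps \<le> 1/4"
      and lam_pos: "\<forall>d\<ge>3. 0 < lam d"
      and lam_range: "\<exists>K1>0. \<exists>K2>0. eventually (\<lambda>d. K1 * ln (real d) \<le> lam d \<and> lam d \<le> K2 * real d) at_top"
      and ode: "\<forall>d\<ge>3. \<forall>t\<ge>0.
           (a d has_real_derivative adot d (lam d) (a d t) (b d t) (c d t)) (at t within {0..}) \<and>
           (b d has_real_derivative bdot d (lam d) (a d t) (b d t) (c d t)) (at t within {0..}) \<and>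
           (c d has_real_derivative cdot d (lam d) (a d t) (b d t) (c d t)) (at t within {0..})"
      and init: "\<forall>d\<ge>3. a d 0 = mu0 c0 (lam d) d \<and> b d 0 = mu0 c0 (lam d) d \<and> c d 0 = mu0 c0 (lam d) d"
  shows
    "eventually (\<lambda>d. {t. 0 \<le> t \<and> rho \<le> rsum d (lam d) (a d t) (b d t) (c d t)} \<noteq> {}
        \<and> {t. T1a d (lam d) rho (a d) (b d) (c d) \<le> t \<and> bdot d (lam d) (a d t) (b d t) (c d t) \<le> 0} \<noteq> {}
        \<and> {t. T1 d (lam d) rho (a d) (b d) (c d) \<le> t \<and> 1 - eps \<le> rsum d (lam d) (a d t) (b d t) (c d t)} \<noteq> {}) at_top
   \<and> (\<lambda>d. T2a d (lam d) rho eps (a d) (b d) (c d) - T1 d (lam d) rho (a d) (b d) (c d)) \<in> \<Theta>(\<lambda>d. ln (1 / rho0 c0 d))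
   \<and> (\<lambda>d. T2a d (lam d) rho eps (a d) (b d) (c d) - T1 d (lam d) rho (a d) (b d) (c d)) \<in> \<Theta>(\<lambda>d. ln (ln (real d)))
   \<and> (\<exists>g::nat \<Rightarrow> real. g \<in> o(\<lambda>_. 1) \<and>
        eventually (\<lambda>d. 2/3 - eps - g d \<le> (real d - 2) * c d (T2a d (lam d) rho eps (a d) (b d) (c d))) at_top)
   \<and> (\<lambda>d. c d (T2a d (lam d) rho eps (a d) (b d) (c d))) \<in> \<Theta>(\<lambda>d. 1 / real d)
   \<and> (\<exists>h::nat \<Rightarrow> real. h \<in> O(\<lambda>_. 1) \<and>
        eventually (\<lambda>d. a d (T2a d (lam d) rho eps (a d) (b d) (c d)) = mu0 c0 (lam d) d * rho0 c0 d powr (- h d)) at_top)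
   \<and> (\<exists>h::nat \<Rightarrow> real. h \<in> O(\<lambda>_. 1) \<and>
        eventually (\<lambda>d. a d (T2a d (lam d) rho eps (a d) (b d) (c d)) = ln (real d) powr (h d) / (real d + lam d)) at_top)
   \<and> (\<lambda>d. a d (T2a d (lam d) rho eps (a d) (b d) (c d))) \<in> o(\<lambda>_. 1)
   \<and> (\<lambda>d. align d (a d (T2a d (lam d) rho eps (a d) (b d) (c d))) (b d (T2a d (lam d) rho eps (a d) (b d) (c d))) (c d (T2a d (lam d) rho eps (a d) (b d) (c d))))
        \<in> O(\<lambda>d. sqrt (real d) * a d (T2a d (lam d) rho eps (a d) (b d) (c d)))
   \<and> (\<lambda>d. align d (a d (T2a d (lam d) rho eps (a d) (b d) (c d))) (b d (T2a d (lam d) rho eps (a d) (b d) (c d))) (c d (T2a d (lam d) rho eps (a d) (b d) (c d)))) \<in> o(\<lambda>_. 1)"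
proof -
  obtain K1 K2 where K1: "0 < K1" and K2: "0 < K2"
    and evL: "eventually (\<lambda>d. K1 * ln (real d) \<le> lam d \<and> lam d \<le> K2 * real d) at_top"
    using lam_range by blast
  define M where "M = 1/(2*K1) + 1/(4*K1*rho)"
  define Lc where "Lc = ln (3*(1+K2))"
  define k where "k = 6*c0/eps"
  define Kc where "Kc = exp (24*M) * exp (6*Lc/eps)"
  have M0: "0 \<le> M" unfolding M_def using K1 rho by simp
  have Lc0: "0 \<le> Lc" unfolding Lc_def using K2 by simp
  have Kc0: "0 < Kc" unfolding Kc_def by simp
  have odeD: "\<And>d. 3 \<le> d \<Longrightarrow> \<forall>t\<ge>0.
           (a d has_real_derivative adot d (lam d) (a d t) (b d t) (c d t)) (at t within {0..}) \<and>
           (b d has_real_derivative bdot d (lam d) (a d t) (b d t) (c d t)) (at t within {0..}) \<and>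
           (c d has_real_derivative cdot d (lam d) (a d t) (b d t) (c d t)) (at t within {0..})"
    using ode by blast
  have initD: "\<And>d. 3 \<le> d \<Longrightarrow> a d 0 = mu0 c0 (lam d) d \<and> b d 0 = mu0 c0 (lam d) d \<and> c d 0 = mu0 c0 (lam d) d"
    using init by blast
  note pdr = per_d[OF c0 rho eps K1 K2 M_def Lc_def k_def Kc_def]
  have ev1: "eventually (\<lambda>d::nat. 3 \<le> d) at_top" by (rule eventually_ge_at_top)
  have ev2: "eventually (\<lambda>d::nat. c0 * ln (ln (real d)) + ln (10 * (1 + K2)^2) \<le> 2 * ln (real d)) at_top"
    using K2 c0 by real_asymp
  have lim_p: "((\<lambda>d::nat. ln (real d) powr (-c0)) \<longlongrightarrow> 0) at_top" using c0 by real_asymp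
  have "((\<lambda>d::nat. ln (real d) powr (-c0) * (exp (24*M) + exp (8*M))) \<longlongrightarrow> 0) at_top"
    by (rule tendsto_mult_left_zero[OF lim_p])
  then have ev3: "eventually (\<lambda>d::nat. ln (real d) powr (-c0) * (exp (24*M) + exp (8*M)) < rho / 2) at_top"
    by (rule order_tendstoD) (use rho in simp)
  have ev5: "eventually (\<lambda>d::nat. 4/rho \<le> real d - 2 \<and> 4/eps \<le> real d - 2) at_top"
  proof -
    have "eventually (\<lambda>d::nat. 4/rho \<le> real d - 2) at_top" using rho by real_asymp
    moreover have "eventually (\<lambda>d::nat. 4/eps \<le> real d - 2) at_top" using eps by real_asymp
    ultimately show ?thesis by eventually_elim auto
  qed
  have limG: "((\<lambda>d::nat. ln (real d) powr k / real d) \<longlongrightarrow> 0) at_top" by real_asymp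
  have limA: "((\<lambda>d::nat. Kc * (ln (real d) powr k / real d)) \<longlongrightarrow> 0) at_top"
    by (rule tendsto_mult_right_zero[OF limG])
  have ev6: "eventually (\<lambda>d::nat. Kc * (ln (real d) powr k / real d) < 1/12) at_top"
    by (rule order_tendstoD(2)[OF limA]) simp
  have "filterlim (\<lambda>d::nat. c0 * ln (ln (real d))) at_top at_top" using c0 by real_asymp
  then have ev7: "eventually (\<lambda>d::nat. max 1 (2 * ln 3 + 16 * M) \<le> c0 * ln (ln (real d))) at_top"
    unfolding filterlim_at_top by blast
  define Good where "Good d \<longleftrightarrow> 3 \<le> d \<and> (K1 * ln (real d) \<le> lam d \<and> lam d \<le> K2 * real d)
     \<and> c0 * ln (ln (real d)) + ln (10 * (1 + K2)^2) \<le> 2 * ln (real d)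
     \<and> ln (real d) powr (-c0) * (exp (24*M) + exp (8*M)) < rho / 2
     \<and> (4/rho \<le> real d - 2 \<and> 4/eps \<le> real d - 2)
     \<and> Kc * (ln (real d) powr k / real d) < 1/12
     \<and> max 1 (2 * ln 3 + 16 * M) \<le> c0 * ln (ln (real d))" for d
  have evG: "eventually Good at_top"
    using ev1 evL ev2 ev3 ev5 ev6 ev7 unfolding Good_def by eventually_elim auto
  have Gs: "3 \<le> d" "K1 * ln (real d) \<le> lam d \<and> lam d \<le> K2 * real d"
    "c0 * ln (ln (real d)) + ln (10 * (1 + K2)^2) \<le> 2 * ln (real d)"
    "ln (real d) powr (-c0) * (exp (24*M) + exp (8*M)) < rho / 2"
    "4/rho \<le> real d - 2 \<and> 4/eps \<le> real d - 2"
    "Kc * (ln (real d) powr k / real d) < 1/12"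
    "max 1 (2 * ln 3 + 16 * M) \<le> c0 * ln (ln (real d))" if "Good d" for d
    using that unfolding Good_def by auto
  define T1f where "T1f d = T1 d (lam d) rho (a d) (b d) (c d)" for d
  define T2f where "T2f d = T2a d (lam d) rho eps (a d) (b d) (c d)" for d
  define A2 where "A2 d = a d (T2f d)" for d
  define ell where "ell d = ln (1 / rho0 c0 d)" for d
  define hh where "hh d = ln (A2 d / mu0 c0 (lam d) d) / ell d" for d
  define al where "al d = align d (a d (T2f d)) (b d (T2f d)) (c d (T2f d))" for d
  have F: "{t. 0 \<le> t \<and> rho \<le> rsum d (lam d) (a d t) (b d t) (c d t)} \<noteq> {}
        \<and> {t. T1a d (lam d) rho (a d) (b d) (c d) \<le> t \<and> bdot d (lam d) (a d t) (b d t) (c d t) \<le> 0} \<noteq> {}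
        \<and> {t. T1 d (lam d) rho (a d) (b d) (c d) \<le> t \<and> 1 - eps \<le> rsum d (lam d) (a d t) (b d t) (c d t)} \<noteq> {}"
    "ell d / 16 \<le> T2f d - T1f d"
    "T2f d - T1f d \<le> (M + (Lc + 1) / (4 * eps)) * ell d"
    "1 \<le> ell d" "ell d = c0 * ln (ln (real d))"
    "2/3 - eps - A2 d \<le> (real d - 2) * c d (T2f d)"
    "0 \<le> A2 d" "A2 d \<le> Kc * (ln (real d) powr k / real d)"
    "1 / (3 * real d) \<le> c d (T2f d)" "c d (T2f d) \<le> 3 / real d"
    "0 \<le> hh d" "hh d \<le> 24 * M + 6 * (Lc + 1) / eps"
    "A2 d = mu0 c0 (lam d) d * rho0 c0 d powr (- hh d)"
    "A2 d = ln (real d) powr (c0 * (hh d - 1)) / (real d + lam d)"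
    "0 \<le> al d" "al d \<le> 3 * sqrt (real d) * A2 d"
    if "Good d" for d
    using pdr[OF odeD[OF Gs(1)[OF that]] initD[OF Gs(1)[OF that]] Gs[OF that]]
    unfolding T1f_def T2f_def A2_def ell_def hh_def al_def by auto
  have C1: "eventually (\<lambda>d. {t. 0 \<le> t \<and> rho \<le> rsum d (lam d) (a d t) (b d t) (c d t)} \<noteq> {}
        \<and> {t. T1a d (lam d) rho (a d) (b d) (c d) \<le> t \<and> bdot d (lam d) (a d t) (b d t) (c d t) \<le> 0} \<noteq> {}
        \<and> {t. T1 d (lam d) rho (a d) (b d) (c d) \<le> t \<and> 1 - eps \<le> rsum d (lam d) (a d t) (b d t) (c d t)} \<noteq> {}) at_top"
    using evG by eventually_elim (rule F(1))
  define c2 where "c2 = M + (Lc + 1) / (4 * eps)"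
  have c2pos: "0 < c2" unfolding c2_def using M0 Lc0 eps by (simp add: add_nonneg_pos)
  have C2: "(\<lambda>d. T2f d - T1f d) \<in> \<Theta>(ell)"
  proof (rule bigthetaI'[of "1/16" c2])
    show "eventually (\<lambda>d. 1/16 * norm (ell d) \<le> norm (T2f d - T1f d) \<and> norm (T2f d - T1f d) \<le> c2 * norm (ell d)) at_top"
      using evG
    proof eventually_elim
      case (elim d)
      note f = F[OF elim]
      have "0 < T2f d - T1f d" using f(2) f(4) by simp
      then show ?case using f(2,3,4) unfolding c2_def by simp
    qed
  qed (use c2pos in auto)
  have C3: "(\<lambda>d. T2f d - T1f d) \<in> \<Theta>(\<lambda>d. ln (ln (real d)))"
  proof (rule bigthetaI'[of "c0/16" "c2 * c0"])
    show "eventually (\<lambda>d. c0/16 * norm (ln (ln (real d))) \<le> norm (T2f d - T1f d) \<and> norm (T2f d - T1f d) \<le> c2 * c0 * norm (ln (ln (real d)))) at_top"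
      using evG
    proof eventually_elim
      case (elim d)
      note f = F[OF elim]
      have "0 < T2f d - T1f d" using f(2) f(4) by simp
      moreover have "0 \<le> ln (ln (real d))" using f(4) f(5) c0 by (smt (verit) mult_nonpos_nonneg zero_less_mult_iff)
      ultimately show ?case using f(2,3,4,5) unfolding c2_def by (simp add: algebra_simps)
    qed
  qed (use c2pos c0 in auto)
  have limA2: "(A2 \<longlongrightarrow> 0) at_top"
  proof (rule tendsto_sandwich[OF _ _ tendsto_const limA])
    show "eventually (\<lambda>d. 0 \<le> A2 d) at_top" using evG by eventually_elim (rule F(7))
    show "eventually (\<lambda>d. A2 d \<le> Kc * (ln (real d) powr k / real d)) at_top" using evG by eventually_elim (rule F(8))
  qed
  have A2o: "A2 \<in> o(\<lambda>_. 1)"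
    by (rule smalloI_tendsto) (use limA2 in auto)
  have C4: "\<exists>g::nat \<Rightarrow> real. g \<in> o(\<lambda>_. 1) \<and>
        eventually (\<lambda>d. 2/3 - eps - g d \<le> (real d - 2) * c d (T2f d)) at_top"
    by (rule exI[of _ A2]) (use A2o evG F(6) in \<open>auto elim: eventually_mono\<close>)
  have C5: "(\<lambda>d. c d (T2f d)) \<in> \<Theta>(\<lambda>d. 1 / real d)"
  proof (rule bigthetaI'[of "1/3" 3])
    show "eventually (\<lambda>d. 1/3 * norm (1 / real d) \<le> norm (c d (T2f d)) \<and> norm (c d (T2f d)) \<le> 3 * norm (1 / real d)) at_top"
      using evG
    proof eventually_elim
      case (elim d)
      note f = F[OF elim]
      have "0 < 1 / (3 * real d)" using Gs(1)[OF elim] by simp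
      then show ?case using f(9,10) by simp
    qed
  qed auto
  have hhO: "hh \<in> O(\<lambda>_. 1)"
  proof (rule bigoI[of _ "24 * M + 6 * (Lc + 1) / eps"])
    show "eventually (\<lambda>d. norm (hh d) \<le> (24 * M + 6 * (Lc + 1) / eps) * norm (1::real)) at_top"
      using evG by eventually_elim (use F(11,12) in auto)
  qed
  have C6: "\<exists>h::nat \<Rightarrow> real. h \<in> O(\<lambda>_. 1) \<and>
        eventually (\<lambda>d. A2 d = mu0 c0 (lam d) d * rho0 c0 d powr (- h d)) at_top"
    by (rule exI[of _ hh]) (use hhO evG F(13) in \<open>auto elim: eventually_mono\<close>)
  have hh2O: "(\<lambda>d. c0 * (hh d - 1)) \<in> O(\<lambda>_. 1)"
  proof (rule bigoI[of _ "c0 * (24 * M + 6 * (Lc + 1) / eps + 1)"])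
    show "eventually (\<lambda>d. norm (c0 * (hh d - 1)) \<le> c0 * (24 * M + 6 * (Lc + 1) / eps + 1) * norm (1::real)) at_top"
      using evG
    proof eventually_elim
      case (elim d)
      note f = F[OF elim]
      have "\<bar>hh d - 1\<bar> \<le> 24 * M + 6 * (Lc + 1) / eps + 1" using f(11,12) by simp
      then have "c0 * \<bar>hh d - 1\<bar> \<le> c0 * (24 * M + 6 * (Lc + 1) / eps + 1)" using c0 by simp
      then show ?case using c0 by (simp add: abs_mult)
    qed
  qed
  have C7: "\<exists>h::nat \<Rightarrow> real. h \<in> O(\<lambda>_. 1) \<and>
        eventually (\<lambda>d. A2 d = ln (real d) powr (h d) / (real d + lam d)) at_top"
    by (rule exI[of _ "\<lambda>d. c0 * (hh d - 1)"]) (use hh2O evG F(14) in \<open>auto elim: eventually_mono\<close>)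
  have C9: "al \<in> O(\<lambda>d. sqrt (real d) * A2 d)"
  proof (rule bigoI[of _ 3])
    show "eventually (\<lambda>d. norm (al d) \<le> 3 * norm (sqrt (real d) * A2 d)) at_top"
      using evG
    proof eventually_elim
      case (elim d)
      note f = F[OF elim]
      show ?case using f(7,15,16) by (simp add: abs_mult)
    qed
  qed
  have limS: "((\<lambda>d::nat. sqrt (real d) * (ln (real d) powr k / real d)) \<longlongrightarrow> 0) at_top" by real_asymp
  have limAl: "(al \<longlongrightarrow> 0) at_top"
  proof (rule tendsto_sandwich[OF _ _ tendsto_const tendsto_mult_right_zero[OF limS, of "3 * Kc"]])
    show "eventually (\<lambda>d. 0 \<le> al d) at_top" using evG by eventually_elim (rule F(15))
    show "eventually (\<lambda>d. al d \<le> 3 * Kc * (sqrt (real d) * (ln (real d) powr k / real d))) at_top"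
      using evG
    proof eventually_elim
      case (elim d)
      note f = F[OF elim]
      have "3 * sqrt (real d) * A2 d \<le> 3 * sqrt (real d) * (Kc * (ln (real d) powr k / real d))"
        using f(8) by (intro mult_left_mono) auto
      then show ?case using f(16) by (simp add: algebra_simps)
    qed
  qed
  have Alo: "al \<in> o(\<lambda>_. 1)"
    by (rule smalloI_tendsto) (use limAl in auto)
  show ?thesis
    using C1 C2 C3 C4 C5 C6 C7 A2o C9 Alo
    unfolding T1f_def T2f_def A2_def ell_def al_def by blast
qed

end
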